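(* Let $G$ be an $H(4,3)$-free graph with an even number $m \ge 24$ of edges and without isolated vertices. Then \[ \rho(G)\le \rho'(m), \] where $\rho'(m)$ is the largest real root of $p_m(x)=x^4-mx^2-(m-2)x+\frac{m}{2}-1$. Moreover, equality holds if and only if $G \cong S^{-}_{\frac{m+4}{2},2}$.
   Context: All graphs are finite, simple and undirected; $\rho(G)$ denotes the spectral radius (largest eigenvalue) of the adjacency matrix of $G$. $H(4,3)$ (the "fish graph") is the graph obtained from a $4$-cycle $C_4$ and a triangle $C_3$ by identifying one vertex of the $4$-cycle with one vertex of the triangle (so it has $6$ vertices and $7$ edges). A graph is $H(4,3)$-free if it contains no subgraph (not necessarily induced) isomorphic to $H(4,3)$. For $n\ge 3$, $S_{n,2}=K_2\vee (n-2)K_1$ is the graph consisting of two adjacent vertices $u,v$ together with $n-2$ further vertices each adjacent to exactly $u$ and $v$; $S^{-}_{n,2}$ is the graph obtained from $S_{n,2}$ by deleting one edge joining a vertex of degree $2$ to one of $u,v$. Thus $S^{-}_{\frac{m+4}{2},2}$ has exactly $m$ edges. *)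

theory Defs
  imports Complex_Main
begin

definition simple_graph :: "'a set \<Rightarrow> ('a \<Rightarrow> 'a \<Rightarrow> bool) \<Rightarrow> bool" where
  "simple_graph V E \<longleftrightarrow> finite V \<and>
     (\<forall>u v. E u v \<longrightarrow> u \<in> V \<and> v \<in> V \<and> u \<noteq> v \<and> E v u)"

definition edge_set :: "('a \<Rightarrow> 'a \<Rightarrow> bool) \<Rightarrow> 'a set set" where
  "edge_set E = {{u, v} | u v. E u v}"

definition num_edges :: "('a \<Rightarrow> 'a \<Rightarrow> bool) \<Rightarrow> nat" where
  "num_edges E = card (edge_set E)"

definition no_isolated :: "'a set \<Rightarrow> ('a \<Rightarrow> 'a \<Rightarrow> bool) \<Rightarrow> bool" where
  "no_isolated V E \<longleftrightarrow> (\<forall>v\<in>V. \<exists>u. E v u)"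

definition adj_eigenvalue :: "'a set \<Rightarrow> ('a \<Rightarrow> 'a \<Rightarrow> bool) \<Rightarrow> real \<Rightarrow> bool" where
  "adj_eigenvalue V E lam \<longleftrightarrow> (\<exists>x :: 'a \<Rightarrow> real. (\<exists>v\<in>V. x v \<noteq> 0) \<and>
      (\<forall>v\<in>V. (\<Sum>u\<in>{u\<in>V. E v u}. x u) = lam * x v))"

definition spectral_radius :: "'a set \<Rightarrow> ('a \<Rightarrow> 'a \<Rightarrow> bool) \<Rightarrow> real" where
  "spectral_radius V E = Max {lam. adj_eigenvalue V E lam}"

text \<open>G contains the fish graph H(4,3) as a (not necessarily induced) subgraph:
  a 4-cycle a-b-c-d-a and a triangle a-e-f-a sharing the vertex a, six distinct vertices.\<close>
definition fish_free :: "'a set \<Rightarrow> ('a \<Rightarrow> 'a \<Rightarrow> bool) \<Rightarrow> bool" where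
  "fish_free V E \<longleftrightarrow> \<not> (\<exists>a b c d e f.
      distinct [a, b, c, d, e, f] \<and> {a, b, c, d, e, f} \<subseteq> V \<and>
      E a b \<and> E b c \<and> E c d \<and> E d a \<and> E a e \<and> E e f \<and> E f a)"

definition graph_iso :: "'a set \<Rightarrow> ('a \<Rightarrow> 'a \<Rightarrow> bool) \<Rightarrow> 'b set \<Rightarrow> ('b \<Rightarrow> 'b \<Rightarrow> bool) \<Rightarrow> bool" where
  "graph_iso V E W F \<longleftrightarrow> (\<exists>h. bij_betw h V W \<and> (\<forall>u\<in>V. \<forall>v\<in>V. E u v \<longleftrightarrow> F (h u) (h v)))"

text \<open>S_{n,2}^- on vertices {0..<n}: u = 0, v = 1 adjacent; every vertex w >= 2 adjacent
  to 0 and 1, except that the edge {2,1} is deleted.\<close>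
definition Sminus_V :: "nat \<Rightarrow> nat set" where
  "Sminus_V n = {0..<n}"

definition Sminus_E :: "nat \<Rightarrow> nat \<Rightarrow> nat \<Rightarrow> bool" where
  "Sminus_E n x y \<longleftrightarrow> x < n \<and> y < n \<and>
     ({x, y} = {0, 1} \<or> (\<exists>w. 2 \<le> w \<and> ({x, y} = {0, w} \<or> ({x, y} = {1, w} \<and> w \<noteq> 2))))"

definition p_m :: "nat \<Rightarrow> real \<Rightarrow> real" where
  "p_m m x = x ^ 4 - real m * x ^ 2 - (real m - 2) * x + real m / 2 - 1"

definition rho' :: "nat \<Rightarrow> real" where
  "rho' m = Max {x. p_m m x = 0}"

end

theory Submission
  imports Defs "HOL-Analysis.Function_Topology" "HOL-Computational_Algebra.Polynomial" "Jordan_Normal_Form.Char_Poly"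
begin

lemma eig_finite:
  assumes sg: "simple_graph V E"
  shows "finite {lam. adj_eigenvalue V E lam}"
proof -
  have fin: "finite V" using sg unfolding simple_graph_def by blast
  define n where "n = card V"
  obtain f where f: "bij_betw f {0..<n} V" using ex_bij_betw_nat_finite[OF fin] unfolding n_def by blast
  define A :: "real mat" where "A = mat n n (\<lambda>(i,j). if E (f i) (f j) then 1 else 0)"
  have A: "A \<in> carrier_mat n n" unfolding A_def by simp
  have "eigenvalue A lam" if ev: "adj_eigenvalue V E lam" for lam
  proof -
    obtain z where z: "\<exists>v\<in>V. z v \<noteq> 0" "\<forall>v\<in>V. (\<Sum>u\<in>{u\<in>V. E v u}. z u) = lam * z v"
      using ev unfolding adj_eigenvalue_def by blast
    define w where "w = vec n (\<lambda>i. z (f i))"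
    have w: "w \<in> carrier_vec n" unfolding w_def by simp
    have "w \<noteq> 0\<^sub>v n"
    proof
      assume w0: "w = 0\<^sub>v n"
      obtain v where v: "v \<in> V" "z v \<noteq> 0" using z(1) by blast
      then obtain i where i: "i < n" "f i = v" using f unfolding bij_betw_def by auto
      have "w $ i = 0" using w0 i by simp
      then show False using i v unfolding w_def by simp
    qed
    moreover have "A *\<^sub>v w = lam \<cdot>\<^sub>v w"
    proof (rule eq_vecI)
      fix i assume "i < dim_vec (lam \<cdot>\<^sub>v w)"
      then have i: "i < n" using w by simp
      have "(A *\<^sub>v w) $ i = (\<Sum>j\<in>{0..<n}. (if E (f i) (f j) then 1 else 0) * z (f j))"
        using i unfolding A_def w_def by (simp add: mult_mat_vec_def scalar_prod_def)
      also have "\<dots> = (\<Sum>u\<in>V. (if E (f i) u then 1 else 0) * z u)"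
        by (rule sum.reindex_bij_betw[OF f, of "\<lambda>u. (if E (f i) u then 1 else 0) * z u"])
      also have "\<dots> = (\<Sum>u\<in>V. if E (f i) u then z u else 0)"
        by (intro sum.cong) auto
      also have "\<dots> = (\<Sum>u\<in>{u\<in>V. E (f i) u}. z u)"
        using fin by (simp add: sum.inter_filter)
      also have "\<dots> = lam * z (f i)" using z(2) f i unfolding bij_betw_def by auto
      finally show "(A *\<^sub>v w) $ i = (lam \<cdot>\<^sub>v w) $ i" using i unfolding w_def by simp
    qed (use A w in simp)
    ultimately show ?thesis unfolding eigenvalue_def eigenvector_def using w A by auto
  qed
  then have "{lam. adj_eigenvalue V E lam} \<subseteq> {k. poly (char_poly A) k = 0}"
    using eigenvalue_root_char_poly[OF A] by blast
  moreover have "char_poly A \<noteq> 0" using degree_monic_char_poly[OF A] by auto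
  then have "finite {k. poly (char_poly A) k = 0}" by (rule poly_roots_finite)
  ultimately show ?thesis by (rule finite_subset)
qed



definition nbs :: "'a set \<Rightarrow> ('a \<Rightarrow> 'a \<Rightarrow> bool) \<Rightarrow> 'a \<Rightarrow> 'a set" where
  "nbs V E v = {w\<in>V. E v w}"

definition qf :: "'a set \<Rightarrow> ('a \<Rightarrow> 'a \<Rightarrow> bool) \<Rightarrow> ('a \<Rightarrow> real) \<Rightarrow> real" where
  "qf V E x = (\<Sum>v\<in>V. \<Sum>w\<in>V. if E v w then x v * x w else 0)"

definition nq :: "'a set \<Rightarrow> ('a \<Rightarrow> real) \<Rightarrow> real" where
  "nq V x = (\<Sum>v\<in>V. (x v)^2)"

lemma nbs_sum: "finite V \<Longrightarrow> (\<Sum>w\<in>nbs V E v. f w) = (\<Sum>w\<in>V. if E v w then f w else 0)"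
  unfolding nbs_def by (simp add: sum.inter_filter)

lemma compact_box: "compact (PiE UNIV (\<lambda>v. if v \<in> V then {-1..1::real} else {0}))"
proof -
  have "compactin (product_topology (\<lambda>i. euclidean) UNIV) (PiE UNIV (\<lambda>v. if v \<in> V then {-1..1::real} else {0}))"
    by (subst compactin_PiE) (auto simp: compactin_euclidean_iff)
  then show ?thesis by (simp add: euclidean_product_topology compactin_euclidean_iff)
qed

lemma cont_nq: "continuous_on UNIV (\<lambda>x. nq V x)"
  unfolding nq_def by (intro continuous_intros continuous_on_product_coordinates)

lemma cont_qf: "continuous_on UNIV (\<lambda>x. qf V E x)"
  unfolding qf_def
  apply (intro continuous_on_sum)
  subgoal for v w by (cases "E v w") (auto intro!: continuous_intros)
  done

lemma nq_zero: "finite V \<Longrightarrow> nq V y = 0 \<Longrightarrow> v \<in> V \<Longrightarrow> y v = 0"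
  unfolding nq_def by (subst (asm) sum_nonneg_eq_0_iff) auto

lemma qf_scale: "qf V E (\<lambda>v. c * y v) = c^2 * qf V E y"
  unfolding qf_def by (simp add: sum_distrib_left power2_eq_square algebra_simps if_distrib cong: if_cong)

lemma nq_scale: "nq V (\<lambda>v. c * y v) = c^2 * nq V y"
  unfolding nq_def by (simp add: sum_distrib_left power_mult_distrib)

lemma qf_cong: "(\<And>v. v \<in> V \<Longrightarrow> x v = y v) \<Longrightarrow> qf V E x = qf V E y"
  unfolding qf_def by (intro sum.cong) auto

lemma nq_cong: "(\<And>v. v \<in> V \<Longrightarrow> x v = y v) \<Longrightarrow> nq V x = nq V y"
  unfolding nq_def by (intro sum.cong) auto

lemma rayleigh_max:
  assumes fin: "finite V" and ne: "V \<noteq> {}"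
  shows "\<exists>x M. nq V x = 1 \<and> qf V E x = M \<and> (\<forall>y. qf V E y \<le> M * nq V y)"
proof -
  define K where "K = PiE UNIV (\<lambda>v. if v \<in> V then {-1..1::real} else {0}) \<inter> {x. nq V x = 1}"
  have cK: "compact K" unfolding K_def
    by (intro compact_Int_closed compact_box closed_Collect_eq cont_nq continuous_on_const)
  obtain v0 where v0: "v0 \<in> V" using ne by auto
  have "nq V (\<lambda>v. if v = v0 then 1 else 0) = (\<Sum>v\<in>V. if v = v0 then 1 else 0)"
    unfolding nq_def by (rule sum.cong) auto
  then have "(\<lambda>v. if v = v0 then 1 else 0) \<in> K"
    using v0 fin unfolding K_def by (auto simp: PiE_iff)
  then have neK: "K \<noteq> {}" by auto
  obtain x where xK: "x \<in> K" and xmax: "\<forall>y\<in>K. qf V E y \<le> qf V E x"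
    using continuous_attains_sup[OF cK neK continuous_on_subset[OF cont_qf]] by blast
  have "qf V E y \<le> qf V E x * nq V y" for y
  proof (cases "nq V y = 0")
    case True
    then have "qf V E y = 0" unfolding qf_def using nq_zero[OF fin True] by (intro sum.neutral ballI) simp
    then show ?thesis using True by simp
  next
    case False
    have pos: "nq V y > 0" using False unfolding nq_def by (simp add: sum_nonneg order_le_neq_trans)
    define s where "s = sqrt (nq V y)"
    have s: "s > 0" "s^2 = nq V y" using pos by (auto simp: s_def)
    define y' where "y' = (\<lambda>v. if v \<in> V then (1/s) * y v else 0)"
    have bnd: "\<bar>y v\<bar> \<le> s" if "v \<in> V" for v
    proof -
      have "(y v)^2 \<le> nq V y" unfolding nq_def
        using member_le_sum[of v V "\<lambda>v. (y v)^2"] that fin by auto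
      then show ?thesis unfolding s_def by (simp add: real_le_rsqrt)
    qed
    have "y' \<in> PiE UNIV (\<lambda>v. if v \<in> V then {-1..1::real} else {0})"
      unfolding y'_def using bnd s(1) by (force simp: PiE_iff abs_le_iff divide_le_eq le_divide_eq)
    moreover have "nq V y' = 1"
    proof -
      have "nq V y' = nq V (\<lambda>v. (1/s) * y v)" by (rule nq_cong) (simp add: y'_def)
      also have "\<dots> = (1/s)^2 * nq V y" by (rule nq_scale)
      also have "\<dots> = 1" using s pos by (simp add: power_divide)
      finally show ?thesis .
    qed
    ultimately have "y' \<in> K" unfolding K_def by auto
    then have "qf V E y' \<le> qf V E x" using xmax by auto
    moreover have "qf V E y' = qf V E y / nq V y"
    proof -
      have "qf V E y' = qf V E (\<lambda>v. (1/s) * y v)" by (rule qf_cong) (simp add: y'_def)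
      also have "\<dots> = (1/s)^2 * qf V E y" by (rule qf_scale)
      also have "\<dots> = qf V E y / nq V y" using s by (simp add: power_divide)
      finally show ?thesis .
    qed
    ultimately show ?thesis using pos by (simp add: divide_le_eq)
  qed
  moreover have "nq V x = 1" using xK unfolding K_def by auto
  ultimately show ?thesis by blast
qed

definition bil :: "'a set \<Rightarrow> ('a \<Rightarrow> 'a \<Rightarrow> bool) \<Rightarrow> ('a \<Rightarrow> real) \<Rightarrow> ('a \<Rightarrow> real) \<Rightarrow> real" where
  "bil V E x y = (\<Sum>v\<in>V. \<Sum>w\<in>V. if E v w then x v * y w else 0)"

lemma qf_bil: "qf V E x = bil V E x x" unfolding qf_def bil_def ..

lemma bil_add_left: "bil V E (\<lambda>v. x v + y v) z = bil V E x z + bil V E y z"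
  unfolding bil_def by (simp add: sum.distrib[symmetric] algebra_simps if_distrib cong: if_cong)
lemma bil_add_right: "bil V E z (\<lambda>v. x v + y v) = bil V E z x + bil V E z y"
  unfolding bil_def by (simp add: sum.distrib[symmetric] algebra_simps if_distrib cong: if_cong)
lemma bil_scale_left: "bil V E (\<lambda>v. c * x v) z = c * bil V E x z"
  unfolding bil_def by (simp add: sum_distrib_left algebra_simps if_distrib cong: if_cong)
lemma bil_scale_right: "bil V E z (\<lambda>v. c * x v) = c * bil V E z x"
  unfolding bil_def by (simp add: sum_distrib_left algebra_simps if_distrib cong: if_cong)

lemma sg_sym: "simple_graph V E \<Longrightarrow> E v w \<Longrightarrow> E w v"
  unfolding simple_graph_def by blast
lemma sg_irr: "simple_graph V E \<Longrightarrow> \<not> E v v"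
  unfolding simple_graph_def by blast
lemma sg_in: "simple_graph V E \<Longrightarrow> E v w \<Longrightarrow> v \<in> V \<and> w \<in> V"
  unfolding simple_graph_def by blast
lemma sg_fin: "simple_graph V E \<Longrightarrow> finite V"
  unfolding simple_graph_def by blast

lemma bil_sym: assumes "simple_graph V E" shows "bil V E x y = bil V E y x"
proof -
  have "bil V E x y = (\<Sum>w\<in>V. \<Sum>v\<in>V. if E v w then x v * y w else 0)"
    unfolding bil_def by (rule sum.swap)
  also have "\<dots> = bil V E y x" unfolding bil_def
    by (intro sum.cong refl) (use sg_sym[OF assms] in \<open>auto simp: mult.commute\<close>)
  finally show ?thesis .
qed

lemma bil_delta_right: assumes "simple_graph V E" "v0 \<in> V"
  shows "bil V E x (\<lambda>v. if v = v0 then 1 else 0) = (\<Sum>w\<in>V. if E v0 w then x w else 0)"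
proof -
  have "bil V E x (\<lambda>v. if v = v0 then 1 else 0) = (\<Sum>v\<in>V. if E v v0 then x v else 0)"
    unfolding bil_def
  proof (intro sum.cong refl)
    fix v assume "v \<in> V"
    have "(\<Sum>w\<in>V. if E v w then x v * (if w = v0 then 1 else 0) else 0) =
      (\<Sum>w\<in>V. if w = v0 then (if E v v0 then x v else 0) else 0)" by (intro sum.cong) auto
    also have "\<dots> = (if E v v0 then x v else 0)" using assms(2) sg_fin[OF assms(1)] by simp
    finally show "(\<Sum>w\<in>V. if E v w then x v * (if w = v0 then 1 else 0) else 0) = (if E v v0 then x v else 0)" .
  qed
  also have "\<dots> = (\<Sum>w\<in>V. if E v0 w then x w else 0)"
    using sg_sym[OF assms(1)] by (intro sum.cong refl) (metis (full_types))
  finally show ?thesis .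
qed

lemma bil_delta_delta: assumes "simple_graph V E" "v0 \<in> V"
  shows "bil V E (\<lambda>v. if v = v0 then 1 else 0) (\<lambda>v. if v = v0 then 1 else 0) = 0"
  unfolding bil_delta_right[OF assms] using sg_irr[OF assms(1)]
  by (intro sum.neutral) auto

lemma eig_of_max:
  assumes sg: "simple_graph V E" and mx: "\<forall>y. qf V E y \<le> M * nq V y"
    and eq: "qf V E x = M * nq V x" and v0: "v0 \<in> V"
  shows "(\<Sum>w\<in>nbs V E v0. x w) = M * x v0"
proof -
  have fin: "finite V" using sg_fin[OF sg] .
  define d where "d = (\<lambda>v. if v = v0 then 1 else (0::real))"
  define S where "S = (\<Sum>w\<in>V. if E v0 w then x w else 0)"
  have key: "2 * t * (S - M * x v0) \<le> M * t^2" for t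
  proof -
    have "qf V E (\<lambda>v. x v + t * d v) = bil V E x x + 2 * t * bil V E x d + t^2 * bil V E d d"
      unfolding qf_bil bil_add_left bil_add_right bil_scale_left bil_scale_right
      using bil_sym[OF sg, of d x] by (simp add: power2_eq_square algebra_simps)
    also have "\<dots> = qf V E x + 2 * t * S"
      using bil_delta_delta[OF sg v0] unfolding d_def S_def bil_delta_right[OF sg v0] qf_bil by simp
    finally have q: "qf V E (\<lambda>v. x v + t * d v) = qf V E x + 2 * t * S" .
    have "nq V (\<lambda>v. x v + t * d v) = (\<Sum>v\<in>V. (x v)^2 + (2 * t * x v + t^2) * d v)"
      unfolding nq_def d_def by (intro sum.cong refl) (simp add: power2_eq_square algebra_simps)
    also have "\<dots> = nq V x + (2 * t * x v0 + t^2)"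
      unfolding nq_def sum.distrib d_def using v0 fin by (simp add: if_distrib[of "\<lambda>a. _ * a"] sum.delta cong: if_cong)
    finally have n: "nq V (\<lambda>v. x v + t * d v) = nq V x + (2 * t * x v0 + t^2)" .
    have "qf V E (\<lambda>v. x v + t * d v) \<le> M * nq V (\<lambda>v. x v + t * d v)" using mx by blast
    then show ?thesis unfolding q n eq by (simp add: algebra_simps)
  qed
  define g where "g = S - M * x v0"
  define c where "c = \<bar>M\<bar> + 1"
  have c: "c > 0" "2 * c - M > 0" unfolding c_def by auto
  have "2 * (g / c) * g \<le> M * (g / c)^2" using key[of "g / c"] unfolding g_def by simp
  then have "2 * c * g^2 \<le> M * g^2" using c by (simp add: power2_eq_square field_simps)
  then have "(2 * c - M) * g^2 \<le> 0" by (simp add: algebra_simps)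
  then have "g^2 \<le> 0" using c by (simp add: mult_le_0_iff)
  then have "g = 0" by simp
  then show ?thesis unfolding g_def S_def using nbs_sum[OF fin, where E=E and v=v0 and f=x] by simp
qed

lemma qf_eig: assumes sg: "simple_graph V E" and ev: "\<forall>v\<in>V. (\<Sum>w\<in>nbs V E v. z w) = lam * z v"
  shows "qf V E z = lam * nq V z"
proof -
  have fin: "finite V" using sg_fin[OF sg] .
  have "qf V E z = (\<Sum>v\<in>V. z v * (\<Sum>w\<in>V. if E v w then z w else 0))"
    unfolding qf_def by (simp add: sum_distrib_left if_distrib cong: if_cong)
  also have "\<dots> = (\<Sum>v\<in>V. z v * (lam * z v))"
    using ev by (intro sum.cong refl) (simp add: nbs_sum[OF fin, where E=E, symmetric])
  also have "\<dots> = lam * nq V z" unfolding nq_def by (simp add: sum_distrib_left power2_eq_square algebra_simps)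
  finally show ?thesis .
qed

lemma nq_pos: "finite V \<Longrightarrow> v \<in> V \<Longrightarrow> z v \<noteq> 0 \<Longrightarrow> nq V z > 0"
  unfolding nq_def by (rule sum_pos2[of V v]) auto

lemma perron:
  assumes sg: "simple_graph V E" and ne: "V \<noteq> {}"
  shows "\<exists>M x. (\<forall>v\<in>V. (\<Sum>w\<in>nbs V E v. x w) = M * x v) \<and> (\<forall>v\<in>V. x v \<ge> 0) \<and>
     (\<exists>v\<in>V. x v \<noteq> 0) \<and> (\<forall>lam. adj_eigenvalue V E lam \<longrightarrow> lam \<le> M) \<and> M \<ge> 0"
proof -
  have fin: "finite V" using sg_fin[OF sg] .
  obtain x0 M where n1: "nq V x0 = 1" and qM: "qf V E x0 = M" and mx: "\<forall>y. qf V E y \<le> M * nq V y"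
    using rayleigh_max[OF fin ne, of E] by blast
  define x where "x = (\<lambda>v. \<bar>x0 v\<bar>)"
  have nx: "nq V x = 1" using n1 unfolding nq_def x_def by simp
  have "qf V E x0 \<le> qf V E x" unfolding qf_def x_def
    by (intro sum_mono) (auto simp: abs_mult[symmetric])
  then have "qf V E x = M * nq V x" using mx nx qM by (metis antisym mult.right_neutral)
  then have eig: "\<forall>v\<in>V. (\<Sum>w\<in>nbs V E v. x w) = M * x v" using eig_of_max[OF sg mx] by blast
  have nz: "\<exists>v\<in>V. x v \<noteq> 0"
  proof (rule ccontr)
    assume "\<not> ?thesis" then have "nq V x = 0" unfolding nq_def by simp
    then show False using nx by simp
  qed
  have bound: "lam \<le> M" if ev: "adj_eigenvalue V E lam" for lam
  proof -
    obtain z where z: "\<exists>v\<in>V. z v \<noteq> 0" "\<forall>v\<in>V. (\<Sum>u\<in>{u\<in>V. E v u}. z u) = lam * z v"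
      using ev unfolding adj_eigenvalue_def by blast
    have "qf V E z = lam * nq V z" using qf_eig[OF sg] z(2) unfolding nbs_def by blast
    moreover have "nq V z > 0" using z(1) nq_pos[OF fin] by blast
    ultimately show ?thesis using mx by (metis mult_le_cancel_right)
  qed
  obtain v0 where v0: "v0 \<in> V" using ne by auto
  have "qf V E (\<lambda>v. if v = v0 then 1 else 0) = 0"
    unfolding qf_bil using bil_delta_delta[OF sg v0] .
  moreover have "nq V (\<lambda>v. if v = v0 then 1 else 0) = 1"
  proof -
    have "nq V (\<lambda>v. if v = v0 then 1 else 0) = (\<Sum>v\<in>V. if v = v0 then 1 else 0)"
      unfolding nq_def by (rule sum.cong) auto
    then show ?thesis using v0 fin by simp
  qed
  ultimately have "M \<ge> 0" using mx by (metis mult.right_neutral)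
  moreover have "\<forall>v\<in>V. x v \<ge> 0" unfolding x_def by simp
  ultimately show ?thesis using eig nz bound by blast
qed




lemma handshake:
  assumes sg: "simple_graph V E"
  shows "2 * num_edges E = (\<Sum>v\<in>V. card (nbs V E v))"
proof -
  have fin: "finite V" using sg_fin[OF sg] .
  define P where "P = Sigma V (nbs V E)"
  have finP: "finite P" unfolding P_def nbs_def using fin by auto
  have cP: "card P = (\<Sum>v\<in>V. card (nbs V E v))"
    unfolding P_def using fin by (subst card_SigmaI) (auto simp: nbs_def)
  define g :: "'a \<times> 'a \<Rightarrow> 'a set" where "g = (\<lambda>p. {fst p, snd p})"
  define F where "F = (\<lambda>e. {p\<in>P. g p = e})"
  have es: "edge_set E = g ` P"
  proof
    show "edge_set E \<subseteq> g ` P"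
    proof
      fix e assume "e \<in> edge_set E"
      then obtain a b where ab: "E a b" "e = {a,b}" unfolding edge_set_def by auto
      then have "(a,b) \<in> P" unfolding P_def nbs_def using sg_in[OF sg ab(1)] by auto
      then show "e \<in> g ` P" unfolding g_def ab(2) by force
    qed
    show "g ` P \<subseteq> edge_set E"
    proof
      fix e assume "e \<in> g ` P"
      then obtain a b where ab: "(a,b) \<in> P" "e = {a,b}" unfolding g_def by auto
      then have "E a b" unfolding P_def nbs_def by auto
      then show "e \<in> edge_set E" unfolding edge_set_def using ab(2) by blast
    qed
  qed
  have finE: "finite (edge_set E)" using es finP by simp
  have UP: "\<Union>(F ` edge_set E) = P" unfolding F_def es by auto
  have c2: "card (F e) = 2" if eE: "e \<in> edge_set E" for e
  proof -
    obtain a b where ab: "E a b" "e = {a, b}" using eE unfolding edge_set_def by auto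
    have abV: "a \<in> V" "b \<in> V" using sg_in[OF sg ab(1)] by auto
    have neq: "a \<noteq> b" using sg_irr[OF sg] ab(1) by auto
    have "F e = {(a,b), (b,a)}"
      unfolding F_def g_def P_def nbs_def ab(2) using abV ab(1) sg_sym[OF sg ab(1)] neq
      by (auto simp: doubleton_eq_iff)
    then show ?thesis using neq by simp
  qed
  have "card P = (\<Sum>e\<in>edge_set E. card (F e))"
    unfolding UP[symmetric]
    by (rule card_UN_disjoint[OF finE]) (auto simp: F_def finP)
  also have "\<dots> = 2 * card (edge_set E)" using c2 by simp
  finally show ?thesis using cP unfolding num_edges_def by simp
qed

lemma graph_iso_sym:
  assumes "graph_iso V E W F" shows "graph_iso W F V E"
proof -
  obtain h where h: "bij_betw h V W" "\<forall>u\<in>V. \<forall>v\<in>V. E u v \<longleftrightarrow> F (h u) (h v)"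
    using assms unfolding graph_iso_def by blast
  define h' where "h' = inv_into V h"
  have b: "bij_betw h' W V" unfolding h'_def by (rule bij_betw_inv_into[OF h(1)])
  have "\<forall>u\<in>W. \<forall>v\<in>W. F u v \<longleftrightarrow> E (h' u) (h' v)"
  proof (intro ballI)
    fix u v assume uv: "u \<in> W" "v \<in> W"
    have "h (h' u) = u" "h (h' v) = v" unfolding h'_def using uv h(1)
      by (auto simp: bij_betw_inv_into_right)
    moreover have "h' u \<in> V" "h' v \<in> V" using b uv by (auto dest: bij_betwE)
    ultimately show "F u v \<longleftrightarrow> E (h' u) (h' v)" using h(2) by metis
  qed
  then show ?thesis unfolding graph_iso_def using b by blast
qed

lemma graph_iso_eig:
  assumes "graph_iso V E W F" "adj_eigenvalue W F lam" shows "adj_eigenvalue V E lam"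
proof -
  obtain h where h: "bij_betw h V W" "\<forall>u\<in>V. \<forall>v\<in>V. E u v \<longleftrightarrow> F (h u) (h v)"
    using assms unfolding graph_iso_def by blast
  obtain z where z: "\<exists>v\<in>W. z v \<noteq> 0" "\<forall>v\<in>W. (\<Sum>u\<in>{u\<in>W. F v u}. z u) = lam * z v"
    using assms(2) unfolding adj_eigenvalue_def by blast
  define x where "x = (\<lambda>v. z (h v))"
  have "\<exists>v\<in>V. x v \<noteq> 0" using z(1) h(1) unfolding x_def bij_betw_def by auto
  moreover have "\<forall>v\<in>V. (\<Sum>u\<in>{u\<in>V. E v u}. x u) = lam * x v"
  proof
    fix v assume v: "v \<in> V"
    have im: "h ` {u\<in>V. E v u} = {u\<in>W. F (h v) u}"
    proof
      show "h ` {u\<in>V. E v u} \<subseteq> {u\<in>W. F (h v) u}" using h v by (auto dest: bij_betwE)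
      show "{u\<in>W. F (h v) u} \<subseteq> h ` {u\<in>V. E v u}"
      proof
        fix w assume w: "w \<in> {u\<in>W. F (h v) u}"
        then obtain u where u: "u \<in> V" "w = h u" using h(1) unfolding bij_betw_def by auto
        then show "w \<in> h ` {u\<in>V. E v u}" using w h(2) v by auto
      qed
    qed
    have inj: "inj_on h {u\<in>V. E v u}" using h(1) unfolding bij_betw_def by (auto intro: inj_on_subset)
    have "(\<Sum>u\<in>{u\<in>V. E v u}. x u) = (\<Sum>u\<in>h ` {u\<in>V. E v u}. z u)"
      unfolding x_def by (simp add: sum.reindex[OF inj])
    also have "\<dots> = lam * x v" unfolding im x_def using z(2) h(1) v by (auto dest: bij_betwE)
    finally show "(\<Sum>u\<in>{u\<in>V. E v u}. x u) = lam * x v" .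
  qed
  ultimately show ?thesis unfolding adj_eigenvalue_def by blast
qed

lemma graph_iso_sr: "graph_iso V E W F \<Longrightarrow> spectral_radius V E = spectral_radius W F"
proof -
  assume a: "graph_iso V E W F"
  have "{lam. adj_eigenvalue V E lam} = {lam. adj_eigenvalue W F lam}"
    using graph_iso_eig[OF a] graph_iso_eig[OF graph_iso_sym[OF a]] by blast
  then show ?thesis unfolding spectral_radius_def by simp
qed



lemma pm_factor: "p_m m x = (x^2 - x - (real m - 3/2)) * (x^2 + x - 1/2) - 1/4"
  unfolding p_m_def by (simp add: field_simps power2_eq_square power4_eq_xxxx)

lemma pm_poly: "p_m m x = poly [:real m/2 - 1, -(real m - 2), - real m, 0, 1:] x"
  unfolding p_m_def by (simp add: algebra_simps power2_eq_square power4_eq_xxxx)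

lemma pm_roots_finite: "finite {x. p_m m x = 0}"
proof -
  have "[:real m/2 - 1, -(real m - 2), - real m, 0, 1::real:] \<noteq> 0" by simp
  then have "finite {x. poly [:real m/2 - 1, -(real m - 2), - real m, 0, 1:] x = 0}"
    by (rule poly_roots_finite)
  then show ?thesis unfolding pm_poly .
qed

lemma rho'_props:
  assumes "m \<ge> 24"
  shows "p_m m (rho' m) = 0" "rho' m > 1" "\<And>x. p_m m x = 0 \<Longrightarrow> x \<le> rho' m"
proof -
  have c: "\<forall>x. 1 \<le> x \<and> x \<le> real m \<longrightarrow> isCont (p_m m) x"
    unfolding p_m_def by (auto intro!: continuous_intros)
  have m: "real m \<ge> 24" using assms by simp
  have p1: "p_m m 1 < 0" unfolding p_m_def using m by simp
  have "p_m m (real m) = real m ^ 4 - real m ^ 3 - real m * (real m - 2) + real m/2 - 1"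
    unfolding p_m_def by (simp add: algebra_simps power2_eq_square power3_eq_cube power4_eq_xxxx)
  also have "\<dots> \<ge> 0"
  proof -
    have "real m ^ 4 \<ge> 2 * real m ^ 3" using m
      by (simp add: power4_eq_xxxx power3_eq_cube mult_right_mono)
    moreover have "real m ^ 3 \<ge> real m * real m" using m by (simp add: power3_eq_cube)
    ultimately show ?thesis using m by (simp add: algebra_simps)
  qed
  finally have pm: "p_m m (real m) \<ge> 0" .
  obtain r where r: "1 \<le> r" "r \<le> real m" "p_m m r = 0"
    using IVT[of "p_m m" 1 0 "real m"] p1 pm m c by auto
  have rne: "r \<in> {x. p_m m x = 0}" using r by simp
  show mx: "\<And>x. p_m m x = 0 \<Longrightarrow> x \<le> rho' m"
    unfolding rho'_def by (rule Max_ge[OF pm_roots_finite]) simp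
  show "p_m m (rho' m) = 0"
    using Max_in[OF pm_roots_finite, of m] rne unfolding rho'_def by auto
  have "r \<noteq> 1" using r p1 by auto
  then show "rho' m > 1" using mx[OF r(3)] r(1) by simp
qed

lemma rho'_gap: assumes "m \<ge> 24" shows "rho' m ^ 2 - rho' m > real m - 3/2"
proof -
  let ?r = "rho' m"
  have r1: "?r > 1" using rho'_props[OF assms] by simp
  have sq: "?r^2 > 1" using r1 by (simp add: power2_eq_square) (metis less_1_mult)
  have "(?r^2 - ?r - (real m - 3/2)) * (?r^2 + ?r - 1/2) = 1/4"
    using rho'_props(1)[OF assms] unfolding pm_factor by simp
  moreover have "?r^2 + ?r - 1/2 > 0" using r1 sq by linarith
  ultimately have "?r^2 - ?r - (real m - 3/2) > 0"
    by (metis zero_less_divide_1_iff zero_less_mult_pos2 zero_less_numeral)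
  then show ?thesis by simp
qed

lemma Sminus_E_iff:
  "Sminus_E n x y \<longleftrightarrow> x < n \<and> y < n \<and>
     ((x = 0 \<and> y \<noteq> 0) \<or> (y = 0 \<and> x \<noteq> 0) \<or> (x = 1 \<and> y \<ge> 3) \<or> (y = 1 \<and> x \<ge> 3))"
  unfolding Sminus_E_def doubleton_eq_iff
  apply (rule iffI)
   apply (elim conjE disjE exE; simp; linarith)
  apply (elim conjE disjE)
     apply (cases "y = 1"; force)
    apply (cases "x = 1"; force)
   apply (rule conjI, simp, rule conjI, simp, rule disjI2, rule exI[of _ y], simp)
  apply (rule conjI, simp, rule conjI, simp, rule disjI2, rule exI[of _ x], simp)
  done

lemma Sm_nb0: "{u\<in>Sminus_V n. Sminus_E n 0 u} = {1..<n}"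
  unfolding Sminus_V_def Sminus_E_iff by auto
lemma Sm_nb1: "n \<ge> 3 \<Longrightarrow> {u\<in>Sminus_V n. Sminus_E n 1 u} = insert 0 {3..<n}"
  unfolding Sminus_V_def Sminus_E_iff by auto
lemma Sm_nb2: "n \<ge> 3 \<Longrightarrow> {u\<in>Sminus_V n. Sminus_E n 2 u} = {0}"
  unfolding Sminus_V_def Sminus_E_iff by auto
lemma Sm_nbw: "3 \<le> w \<Longrightarrow> w < n \<Longrightarrow> {u\<in>Sminus_V n. Sminus_E n w u} = {0, 1}"
  unfolding Sminus_V_def Sminus_E_iff by auto

lemma Sm_simple: "simple_graph (Sminus_V n) (Sminus_E n)"
  unfolding simple_graph_def Sminus_V_def Sminus_E_iff by auto

lemma split_1n: "(n::nat) \<ge> 3 \<Longrightarrow> (\<Sum>u\<in>{1..<n}. f u) = f 1 + f 2 + (\<Sum>u\<in>{3..<n}. (f u :: real))"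
proof -
  assume n: "n \<ge> 3"
  have "{1..<n} = insert 1 (insert 2 {3..<n})" using n by auto
  then show ?thesis by simp
qed

lemma Sm_eig:
  assumes n: "n \<ge> 4" and ev: "adj_eigenvalue (Sminus_V n) (Sminus_E n) lam"
  shows "lam = 0 \<or> p_m (2*n-4) lam = 0"
proof (rule ccontr)
  assume "\<not> ?thesis"
  then have l0: "lam \<noteq> 0" and pn: "p_m (2*n-4) lam \<noteq> 0" by auto
  obtain z where z: "\<exists>v\<in>Sminus_V n. z v \<noteq> 0"
    "\<forall>v\<in>Sminus_V n. (\<Sum>u\<in>{u\<in>Sminus_V n. Sminus_E n v u}. z u) = lam * z v"
    using ev unfolding adj_eigenvalue_def by blast
  define W where "W = (\<Sum>u\<in>{3..<n}. z u)"
  define k where "k = real n - 3"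
  have in0: "0 \<in> Sminus_V n" "1 \<in> Sminus_V n" "2 \<in> Sminus_V n" using n unfolding Sminus_V_def by auto
  have n3: "n \<ge> 3" using n by simp
  have "(\<Sum>u\<in>{u\<in>Sminus_V n. Sminus_E n 0 u}. z u) = lam * z 0" using z(2) in0(1) by blast
  then have e0: "lam * z 0 = z 1 + z 2 + W"
    unfolding Sm_nb0 W_def split_1n[OF n3] by simp
  have "(\<Sum>u\<in>{u\<in>Sminus_V n. Sminus_E n 1 u}. z u) = lam * z 1" using z(2) in0(2) by blast
  then have e1: "lam * z 1 = z 0 + W"
    unfolding Sm_nb1[OF n3] W_def by simp
  have "(\<Sum>u\<in>{u\<in>Sminus_V n. Sminus_E n 2 u}. z u) = lam * z 2" using z(2) in0(3) by blast
  then have e2: "lam * z 2 = z 0"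
    unfolding Sm_nb2[OF n3] by simp
  have ew: "lam * z w = z 0 + z 1" if "w \<in> {3..<n}" for w
  proof -
    have "w \<in> Sminus_V n" using that unfolding Sminus_V_def by auto
    then show ?thesis using z(2) Sm_nbw[of w n] that by auto
  qed
  have "lam * W = (\<Sum>u\<in>{3..<n}. z 0 + z 1)" unfolding W_def sum_distrib_left
    using ew by (intro sum.cong) auto
  then have lW: "lam * W = k * (z 0 + z 1)" unfolding k_def using n by (simp add: of_nat_diff)
  have E1: "(lam^2 - 1 - k) * z 0 - (lam + k) * z 1 = 0"
  proof -
    have "lam * (lam * z 0) = lam * z 1 + lam * z 2 + lam * W" using e0 by (simp add: algebra_simps)
    then show ?thesis using e2 lW by (simp add: algebra_simps power2_eq_square)
  qed
  have E2: "(lam^2 - k) * z 1 - (lam + k) * z 0 = 0"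
  proof -
    have "lam * (lam * z 1) = lam * z 0 + lam * W" using e1 by (simp add: algebra_simps)
    then show ?thesis using lW by (simp add: algebra_simps power2_eq_square)
  qed
  have rm: "real (2*n-4) = 2 * k + 2" unfolding k_def using n by (simp add: of_nat_diff)
  have pk: "p_m (2*n-4) lam = (lam^2 - 1 - k) * (lam^2 - k) - (lam + k)^2"
    unfolding p_m_def rm by (simp add: field_simps power2_eq_square power4_eq_xxxx)
  have "p_m (2*n-4) lam * z 0 = (lam^2 - k) * ((lam^2 - 1 - k) * z 0 - (lam + k) * z 1) + (lam + k) * ((lam^2 - k) * z 1 - (lam + k) * z 0)"
    unfolding pk by (simp add: algebra_simps power2_eq_square)
  then have z0: "z 0 = 0" using E1 E2 pn by simp
  have "p_m (2*n-4) lam * z 1 = (lam^2 - 1 - k) * ((lam^2 - k) * z 1 - (lam + k) * z 0) + (lam + k) * ((lam^2 - 1 - k) * z 0 - (lam + k) * z 1)"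
    unfolding pk by (simp add: algebra_simps power2_eq_square)
  then have z1: "z 1 = 0" using E1 E2 pn by simp
  have "z v = 0" if vV: "v \<in> Sminus_V n" for v
  proof -
    consider "v = 0" | "v = 1" | "v = 2" | "v \<in> {3..<n}" using vV unfolding Sminus_V_def by force
    then show ?thesis
    proof cases
      case 3 then show ?thesis using e2 z0 l0 by simp
    next
      case 4 then show ?thesis using ew[OF 4] z0 z1 l0 by simp
    qed (use z0 z1 in auto)
  qed
  then show False using z(1) by blast
qed

lemma Sm_rho'_eig:
  assumes n: "n \<ge> 14"
  shows "adj_eigenvalue (Sminus_V n) (Sminus_E n) (rho' (2*n-4))"
proof -
  let ?m = "2*n-4"
  have m: "?m \<ge> 24" using n by simp
  define lam where "lam = rho' ?m"
  have l1: "lam > 1" using rho'_props(2)[OF m] unfolding lam_def .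
  have pl: "p_m ?m lam = 0" using rho'_props(1)[OF m] unfolding lam_def .
  define k where "k = real n - 3"
  have rm: "real (2*n-4) = 2 * k + 2" unfolding k_def using n by (simp add: of_nat_diff)
  have pk: "p_m ?m lam = (lam^2 - 1 - k) * (lam^2 - k) - (lam + k)^2"
    unfolding p_m_def rm by (simp add: field_simps power2_eq_square power4_eq_xxxx)
  have n3: "n \<ge> 3" using n by simp
  define a where "a = lam + k"
  define b where "b = lam^2 - 1 - k"
  define z where "z = (\<lambda>v::nat. if v = 0 then a else if v = 1 then b else if v = 2 then a / lam else (a + b) / lam)"
  have k: "k \<ge> 11" unfolding k_def using n by simp
  have W: "(\<Sum>u\<in>{3..<n}. z u) = k * ((a + b) / lam)"
  proof -
    have "(\<Sum>u\<in>{3..<n}. z u) = (\<Sum>u\<in>{3..<n}. (a + b) / lam)" unfolding z_def by (intro sum.cong) auto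
    then show ?thesis unfolding k_def using n by (simp add: of_nat_diff)
  qed
  have eq: "\<forall>v\<in>Sminus_V n. (\<Sum>u\<in>{u\<in>Sminus_V n. Sminus_E n v u}. z u) = lam * z v"
  proof
    fix v assume v: "v \<in> Sminus_V n"
    consider "v = 0" | "v = 1" | "v = 2" | "v \<in> {3..<n}" using v unfolding Sminus_V_def by force
    then show "(\<Sum>u\<in>{u\<in>Sminus_V n. Sminus_E n v u}. z u) = lam * z v"
    proof cases
      case 1
      have "(\<Sum>u\<in>{u\<in>Sminus_V n. Sminus_E n v u}. z u) = b + a / lam + k * ((a + b) / lam)"
        unfolding 1 Sm_nb0 split_1n[OF n3] W by (simp add: z_def)
      also have "\<dots> = lam * z v" unfolding 1 z_def a_def b_def using l1
        by (simp add: field_simps power2_eq_square)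
      finally show ?thesis .
    next
      case 2
      have "(\<Sum>u\<in>{u\<in>Sminus_V n. Sminus_E n v u}. z u) = a + k * ((a + b) / lam)"
        unfolding 2 Sm_nb1[OF n3] by (simp add: W) (simp add: z_def)
      also have "\<dots> = lam * z v"
      proof -
        have h: "(lam^2 - 1 - k) * (lam^2 - k) - (lam + k)^2 = 0" using pl pk by simp
        have "lam * (a + k * ((a + b) / lam)) = (lam + k) * a + k * b" using l1 by (simp add: field_simps)
        moreover have "(lam + k) * a + k * b - lam * (lam * b) = - ((lam^2 - 1 - k) * (lam^2 - k) - (lam + k)^2)"
          unfolding a_def b_def by (simp add: algebra_simps power2_eq_square)
        ultimately have "lam * (a + k * ((a + b) / lam)) = lam * (lam * b)" using h by simp
        then show ?thesis unfolding 2 z_def using l1 by simp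
      qed
      finally show ?thesis .
    next
      case 3
      then show ?thesis using n l1 by (simp add: Sm_nb2 z_def)
    next
      case 4
      then show ?thesis using l1 by (simp add: Sm_nbw z_def)
    qed
  qed
  have "z 0 \<noteq> 0" unfolding z_def a_def using l1 k by simp
  moreover have "0 \<in> Sminus_V n" unfolding Sminus_V_def using n by simp
  ultimately show ?thesis unfolding adj_eigenvalue_def lam_def[symmetric] using eq by blast
qed

lemma Sm_sr:
  assumes n: "n \<ge> 14"
  shows "spectral_radius (Sminus_V n) (Sminus_E n) = rho' (2*n-4)"
  unfolding spectral_radius_def
proof (rule Max_eqI)
  show "finite {lam. adj_eigenvalue (Sminus_V n) (Sminus_E n) lam}" by (rule eig_finite[OF Sm_simple])
  show "rho' (2*n-4) \<in> {lam. adj_eigenvalue (Sminus_V n) (Sminus_E n) lam}" using Sm_rho'_eig[OF n] by simp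
  fix y assume "y \<in> {lam. adj_eigenvalue (Sminus_V n) (Sminus_E n) lam}"
  then have "y = 0 \<or> p_m (2*n-4) y = 0" using Sm_eig[of n y] n by simp
  moreover have "2*n-4 \<ge> 24" using n by simp
  ultimately show "y \<le> rho' (2*n-4)" using rho'_props[of "2*n-4"] by fastforce
qed



lemma fish_at:
  assumes sg: "simple_graph V E" and ff: "fish_free V E" and u: "u \<in> V"
    and b: "b \<in> nbs V E u" and d: "d \<in> nbs V E u" and z: "z \<in> V" "z \<noteq> u"
    and bz: "E b z" and zd: "E z d" and bd: "b \<noteq> d"
    and e: "e \<in> nbs V E u" and f: "f \<in> nbs V E u" and ef: "E e f"
    and ne: "e \<noteq> b" "e \<noteq> z" "e \<noteq> d" "f \<noteq> b" "f \<noteq> z" "f \<noteq> d"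
  shows False
proof -
  have Eu: "E u b" "E u d" "E u e" "E u f" using b d e f unfolding nbs_def by auto
  have V: "b \<in> V" "d \<in> V" "e \<in> V" "f \<in> V" using b d e f unfolding nbs_def by auto
  have irr: "\<And>a. \<not> E a a" using sg_irr[OF sg] .
  have dist: "distinct [u, b, z, d, e, f]"
    using Eu irr bz zd ef ne bd z(2) by auto
  have "E u b \<and> E b z \<and> E z d \<and> E d u \<and> E u e \<and> E e f \<and> E f u"
    using Eu bz zd ef sg_sym[OF sg] by blast
  then show False using ff dist u V z unfolding fish_free_def by blast
qed

lemma card_ge2_obtain:
  assumes "card X \<ge> 2" obtains b d where "b \<in> X" "d \<in> X" "b \<noteq> d"
proof -
  have "finite X" using assms card.infinite by force
  obtain b where b: "b \<in> X" using assms by fastforce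
  have "card (X - {b}) \<ge> 1" using assms b \<open>finite X\<close> by (simp add: card_Diff_singleton)
  then have "X - {b} \<noteq> {}" by (metis card.empty not_one_le_zero)
  then obtain d where "d \<in> X - {b}" by blast
  then show ?thesis using that b by auto
qed

context
  fixes E :: "'a \<Rightarrow> 'a \<Rightarrow> bool" and A :: "'a set"
  assumes sym: "\<And>a b. E a b \<Longrightarrow> E b a" and irr: "\<And>a. \<not> E a a"
    and FL: "\<And>b z d e f. b\<in>A \<Longrightarrow> z\<in>A \<Longrightarrow> d\<in>A \<Longrightarrow> e\<in>A \<Longrightarrow> f\<in>A \<Longrightarrow> E b z \<Longrightarrow> E z d \<Longrightarrow> b\<noteq>d
        \<Longrightarrow> E e f \<Longrightarrow> e\<noteq>b \<Longrightarrow> e\<noteq>z \<Longrightarrow> e\<noteq>d \<Longrightarrow> f\<noteq>b \<Longrightarrow> f\<noteq>z \<Longrightarrow> f\<noteq>d \<Longrightarrow> False"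
begin

lemma struct_aux:
  assumes A: "c \<in> A" "b \<in> A" "d \<in> A" "f \<in> A"
    and cb: "E c b" and cd: "E c d" and bd: "b \<noteq> d" and bf: "E b f" and fc: "f \<noteq> c"
  shows "\<exists>S. S \<subseteq> A \<and> finite S \<and> card S \<le> 4 \<and> (\<forall>v\<in>A. \<forall>w\<in>A. E v w \<longrightarrow> v \<in> S \<and> w \<in> S)"
proof (cases "f = d")
  case fd: True
  have bc: "b \<noteq> c" "d \<noteq> c" using cb cd irr by auto
  have tri: "E b c" "E c b" "E c d" "E d c" "E b d" "E d b" using cb cd bf fd sym by auto
  have meet: "v \<in> {b,c,d} \<or> w \<in> {b,c,d}" if "v \<in> A" "w \<in> A" "E v w" for v w
    using FL[of b c d v w] that A tri bd by auto
  show ?thesis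
  proof (cases "\<forall>v\<in>A. \<forall>w\<in>A. E v w \<longrightarrow> v \<in> {b,c,d} \<and> w \<in> {b,c,d}")
    case True
    then show ?thesis using A by (intro exI[of _ "{b,c,d}"]) (auto simp: card_insert_if)
  next
    case False
    then obtain t h where th: "t \<in> A" "h \<in> A" "E t h" "t \<in> {b,c,d}" "h \<notin> {b,c,d}"
      using meet sym by blast
    have Eht: "E h t" using th sym by auto
    have hne: "h \<noteq> b" "h \<noteq> c" "h \<noteq> d" using th(5) by auto
    have side: "w \<in> insert h {b,c,d}" if vw': "v' \<in> A" "w \<in> A" "E v' w" for v' w
    proof (rule ccontr)
      assume wS: "w \<notin> insert h {b,c,d}"
      then have wne: "w \<noteq> h" "w \<noteq> b" "w \<noteq> c" "w \<noteq> d" by auto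
      have v'T: "v' \<in> {b,c,d}" using meet[OF vw'] wS by auto
      have AA: "h \<in> A" "w \<in> A" "v' \<in> A" using th vw' by auto
      consider "t = b" | "t = c" | "t = d" using th(4) by auto
      then show False
      proof cases
        case 1
        consider "v' = b" | "v' = c" | "v' = d" using v'T by auto
        then show False
        proof cases
          case 1 then show False using FL[of h b w c d] A AA tri Eht vw'(3) \<open>t = b\<close> hne wne bc bd by auto
        next
          case 2 then show False using FL[of h b d c w] A AA tri Eht vw'(3) \<open>t = b\<close> hne wne bc bd by auto
        next
          case 3 then show False using FL[of h b c d w] A AA tri Eht vw'(3) \<open>t = b\<close> hne wne bc bd by auto
        qed
      next
        case 2
        consider "v' = b" | "v' = c" | "v' = d" using v'T by auto
        then show False
        proof cases
          case 1 then show False using FL[of h c d b w] A AA tri Eht vw'(3) \<open>t = c\<close> hne wne bc bd by auto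
        next
          case 2 then show False using FL[of h c w b d] A AA tri Eht vw'(3) \<open>t = c\<close> hne wne bc bd by auto
        next
          case 3 then show False using FL[of h c b d w] A AA tri Eht vw'(3) \<open>t = c\<close> hne wne bc bd by auto
        qed
      next
        case 3
        consider "v' = b" | "v' = c" | "v' = d" using v'T by auto
        then show False
        proof cases
          case 1 then show False using FL[of h d c b w] A AA tri Eht vw'(3) \<open>t = d\<close> hne wne bc bd by auto
        next
          case 2 then show False using FL[of h d b c w] A AA tri Eht vw'(3) \<open>t = d\<close> hne wne bc bd by auto
        next
          case 3 then show False using FL[of h d w b c] A AA tri Eht vw'(3) \<open>t = d\<close> hne wne bc bd by auto
        qed
      qed
    qed
    have all: "v \<in> insert h {b,c,d} \<and> w \<in> insert h {b,c,d}" if vw: "v \<in> A" "w \<in> A" "E v w" for v w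
      using side[OF vw] side[of w v] vw sym by blast
    show ?thesis
      using A th all by (intro exI[of _ "insert h {b,c,d}"]) (auto simp: card_insert_if)
  qed
next
  case fd: False
  have ne: "b \<noteq> c" "d \<noteq> c" "f \<noteq> b" using cb cd bf irr by auto
  have side: "w \<in> {f,b,c,d}" if vw: "v \<in> A" "w \<in> A" "E v w" for v w
  proof (rule ccontr)
    assume wS: "w \<notin> {f,b,c,d}"
    have Ewv: "E w v" using vw sym by auto
    consider "v \<notin> {f,b,c,d}" | "v = f" | "v = b" | "v = c" | "v = d" by auto
    then show False
    proof cases
      case 1 then show False using FL[of b c d v w] A vw cb cd bd sym wS by auto
    next
      case 2 then show False using FL[of b c d v w] A vw cb cd bd sym wS fd fc ne by auto
    next
      case 3 then show False using FL[of w b f c d] A vw cb cd bd bf sym wS fd fc ne by auto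
    next
      case 4 then show False using FL[of w c d f b] A vw cb cd bd bf sym wS fd fc ne by auto
    next
      case 5 then show False using FL[of f b c d w] A vw cb cd bd bf sym wS fd fc ne by auto
    qed
  qed
  show ?thesis
    using A side sym by (intro exI[of _ "{f,b,c,d}"]) (auto simp: card_insert_if)
qed

lemma struct_lemma:
  shows "(\<forall>v\<in>A. card {w\<in>A. E v w} \<le> 1) \<or>
         (\<exists>c\<in>A. card {w\<in>A. E c w} \<ge> 2 \<and> (\<forall>v\<in>A. \<forall>w\<in>A. E v w \<longrightarrow> v = c \<or> w = c)) \<or>
         (\<exists>S. S \<subseteq> A \<and> finite S \<and> card S \<le> 4 \<and> (\<forall>v\<in>A. \<forall>w\<in>A. E v w \<longrightarrow> v \<in> S \<and> w \<in> S))"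
proof -
  { assume n1: "\<not> (\<forall>v\<in>A. card {w\<in>A. E v w} \<le> 1)"
      and n2: "\<not> (\<exists>c\<in>A. card {w\<in>A. E c w} \<ge> 2 \<and> (\<forall>v\<in>A. \<forall>w\<in>A. E v w \<longrightarrow> v = c \<or> w = c))"
    obtain c where c: "c \<in> A" "card {w\<in>A. E c w} \<ge> 2" using n1 by force
    obtain b d where bd: "b \<in> {w\<in>A. E c w}" "d \<in> {w\<in>A. E c w}" "b \<noteq> d"
      using card_ge2_obtain[OF c(2)] by blast
    obtain e f where ef: "e \<in> A" "f \<in> A" "E e f" "e \<noteq> c" "f \<noteq> c" using n2 c by blast
    have bc: "b \<noteq> c" "d \<noteq> c" using bd irr by auto
    have "e \<in> {b,d} \<or> f \<in> {b,d}"
    proof (rule ccontr)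
      assume "\<not> (e \<in> {b,d} \<or> f \<in> {b,d})"
      then show False using FL[of b c d e f] bd ef sym bc c by auto
    qed
    then have "\<exists>S. S \<subseteq> A \<and> finite S \<and> card S \<le> 4 \<and> (\<forall>v\<in>A. \<forall>w\<in>A. E v w \<longrightarrow> v \<in> S \<and> w \<in> S)"
    proof (elim disjE insertE emptyE)
      assume "e = b" then show ?thesis
        using struct_aux[of c b d f] c bd ef by auto
    next
      assume "e = d" then show ?thesis
        using struct_aux[of c d b f] c bd ef by auto
    next
      assume "f = b" then show ?thesis
        using struct_aux[of c b d e] c bd ef sym by auto
    next
      assume "f = d" then show ?thesis
        using struct_aux[of c d b e] c bd ef sym by auto
    qed
  }
  then show ?thesis by blast
qed

end


lemma nat_cases8:
  fixes p q :: nat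
  assumes "p \<le> 3" "q \<le> 2" "q \<ge> 1 \<longrightarrow> p \<le> 2"
  shows "p = 0 \<or> (p = 1 \<and> q = 0) \<or> (p = 2 \<and> q = 0) \<or> (p = 3 \<and> q = 0)
        \<or> (p = 1 \<and> q = 1) \<or> (p = 1 \<and> q = 2) \<or> (p = 2 \<and> q = 1) \<or> (p = 2 \<and> q = 2)"
  using assms by auto

lemma brk:
  fixes a b R r Z :: real
  assumes c: "(a = 0) \<or> (a = 1 \<and> b = 0) \<or> (a = 2 \<and> b = 0) \<or> (a = 3 \<and> b = 0)
        \<or> (a = 1 \<and> b = 1) \<or> (a = 1 \<and> b = 2) \<or> (a = 2 \<and> b = 1) \<or> (a = 2 \<and> b = 2)"
    and "r * Z \<le> r * (a + b)" "Z \<le> a + b" "Z \<ge> 0" "r * r \<ge> 3 * r + 9" "r \<ge> 0"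
  shows "0 \<le> a * (r * r) - a * (r * Z) - 3 * a * Z + b * (r * r) / 2"
  using c assms(2-) by (elim disjE conjE; simp)

lemma fin_contra:
  fixes rho a k :: real
  assumes "a * rho + a * k < 1 / 2 * (rho * rho + rho)" "rho * rho \<le> 2 * k + a + rho"
    "3 * rho \<le> a * rho" "3 * k \<le> a * k" "a < rho / 2" "26 / 5 \<le> rho" "k \<ge> 0"
  shows False
  using assms by (simp add: algebra_simps; linarith)

lemma nbs_inter: "T \<subseteq> V \<Longrightarrow> nbs V E v \<inter> T = {w\<in>T. E v w}"
  unfolding nbs_def by auto

lemma dc:
  assumes sg: "simple_graph V E" and S: "S \<subseteq> V" and T: "T \<subseteq> V"
  shows "(\<Sum>v\<in>S. \<Sum>w\<in>nbs V E v \<inter> T. f w) = (\<Sum>w\<in>T. real (card (nbs V E w \<inter> S)) * f w)"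
proof -
  have fin: "finite S" "finite T" using sg_fin[OF sg] S T finite_subset by auto
  have "(\<Sum>v\<in>S. \<Sum>w\<in>nbs V E v \<inter> T. f w) = (\<Sum>v\<in>S. \<Sum>w\<in>T. if E v w then f w else 0)"
    unfolding nbs_inter[OF T] using fin by (simp add: sum.inter_filter)
  also have "\<dots> = (\<Sum>w\<in>T. \<Sum>v\<in>S. if E v w then f w else 0)" by (rule sum.swap)
  also have "\<dots> = (\<Sum>w\<in>T. real (card (nbs V E w \<inter> S)) * f w)"
  proof (intro sum.cong refl)
    fix w assume "w \<in> T"
    have "(\<Sum>v\<in>S. if E v w then f w else 0) = (\<Sum>v\<in>S. if E w v then f w else 0)"
      using sg_sym[OF sg] by (intro sum.cong refl) (metis (full_types))
    also have "\<dots> = (\<Sum>v\<in>{v\<in>S. E w v}. f w)"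
      using fin by (simp add: sum.inter_filter[symmetric])
    also have "\<dots> = real (card (nbs V E w \<inter> S)) * f w" unfolding nbs_inter[OF S] by simp
    finally show "(\<Sum>v\<in>S. if E v w then f w else 0) = real (card (nbs V E w \<inter> S)) * f w" .
  qed
  finally show ?thesis .
qed

context
  fixes V :: "'a set" and E :: "'a \<Rightarrow> 'a \<Rightarrow> bool" and u :: 'a and y :: "'a \<Rightarrow> real" and rho :: real and m :: nat
  assumes sg: "simple_graph V E" and ff: "fish_free V E" and ni: "no_isolated V E"
    and me: "num_edges E = m" and evm: "even m" and m24: "m \<ge> 24"
    and uV: "u \<in> V" and eig: "\<forall>v\<in>V. (\<Sum>w\<in>nbs V E v. y w) = rho * y v"
    and nn: "\<forall>v\<in>V. 0 \<le> y v" and le1: "\<forall>v\<in>V. y v \<le> 1" and yu: "y u = 1"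
    and big: "rho^2 - rho > real m - 3/2" and rpos: "rho \<ge> 0"
begin

abbreviation "A \<equiv> nbs V E u"
abbreviation "B \<equiv> V - insert u A"
abbreviation "dA v \<equiv> card (nbs V E v \<inter> A)"
abbreviation "dB v \<equiv> card (nbs V E v \<inter> B)"

lemma finV: "finite V" using sg_fin[OF sg] .
lemma AV: "A \<subseteq> V" unfolding nbs_def by auto
lemma BV: "B \<subseteq> V" by auto
lemma finA: "finite A" using finite_subset[OF AV finV] .
lemma finB: "finite B" using finV by auto
lemma uA: "u \<notin> A" unfolding nbs_def using sg_irr[OF sg] by auto
lemma AB: "A \<inter> B = {}" by auto
lemma Vsplit: "V = insert u (A \<union> B)" using uV AV by auto

lemma sumV: "(\<Sum>v\<in>V. f v) = f u + (\<Sum>v\<in>A. f v) + (\<Sum>v\<in>B. f v)"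
proof -
  have "sum f (insert u (A \<union> B)) = f u + sum f A + sum f B"
    using finA finB uA by (simp add: sum.union_disjoint[OF finA finB AB] add.assoc)
  then show ?thesis unfolding Vsplit[symmetric] .
qed

lemma rho_big: "rho \<ge> 26/5"
proof (rule ccontr)
  assume "\<not> ?thesis"
  then have "rho < 26/5" by simp
  then have "rho * rho \<le> 26/5 * rho" using rpos by (intro mult_right_mono) auto
  then have "rho^2 - rho \<le> 21/5 * rho" by (simp add: power2_eq_square)
  also have "\<dots> < 21/5 * (26/5)" using \<open>rho < 26/5\<close> by simp
  finally show False using big m24 by simp
qed

lemma nbA_split:
  assumes v: "v \<in> A"
  shows "(\<Sum>w\<in>nbs V E v. y w) = 1 + (\<Sum>w\<in>nbs V E v \<inter> A. y w) + (\<Sum>w\<in>nbs V E v \<inter> B. y w)"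
proof -
  have Evu: "E v u" using v sg_sym[OF sg] unfolding nbs_def by auto
  have eq: "nbs V E v = insert u ((nbs V E v \<inter> A) \<union> (nbs V E v \<inter> B))"
    using Evu uV unfolding nbs_def by auto
  have fin: "finite (nbs V E v \<inter> A)" "finite (nbs V E v \<inter> B)" using finA finB by auto
  show ?thesis
    apply (subst eq)
    apply (subst sum.insert)
    using fin uA apply auto[2]
    apply (subst sum.union_disjoint)
    using fin yu by auto
qed

lemma nbB_split:
  assumes w: "w \<in> B"
  shows "(\<Sum>z\<in>nbs V E w. y z) = (\<Sum>z\<in>nbs V E w \<inter> A. y z) + (\<Sum>z\<in>nbs V E w \<inter> B. y z)"
proof -
  have "\<not> E w u" using w sg_sym[OF sg] uV unfolding nbs_def by auto
  then have eq: "nbs V E w = (nbs V E w \<inter> A) \<union> (nbs V E w \<inter> B)"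
    unfolding nbs_def by auto
  have fin: "finite (nbs V E w \<inter> A)" "finite (nbs V E w \<inter> B)" using finA finB by auto
  show ?thesis by (subst eq, subst sum.union_disjoint) (use fin in auto)
qed

lemma rho_sumA: "rho = (\<Sum>v\<in>A. y v)"
  using eig uV yu by auto

lemma rho_sq: "rho^2 = real (card A) + (\<Sum>v\<in>A. real (dA v) * y v) + (\<Sum>w\<in>B. real (dA w) * y w)"
proof -
  have "rho^2 = (\<Sum>v\<in>A. rho * y v)" using rho_sumA by (simp add: power2_eq_square sum_distrib_left)
  also have "\<dots> = (\<Sum>v\<in>A. \<Sum>w\<in>nbs V E v \<inter> V. y w)"
    using eig AV by (intro sum.cong refl) (auto simp: nbs_def Int_absorb2)
  also have "\<dots> = (\<Sum>w\<in>V. real (dA w) * y w)" by (rule dc[OF sg AV subset_refl])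
  also have "\<dots> = real (dA u) * y u + ((\<Sum>v\<in>A. real (dA v) * y v) + (\<Sum>w\<in>B. real (dA w) * y w))"
    by (subst sumV) simp
  also have "dA u = card A" by (simp add: Int_absorb)
  finally show ?thesis using yu by simp
qed

lemma deg_sum: "2 * real m = 2 * real (card A) + (\<Sum>v\<in>A. real (dA v)) + 2 * (\<Sum>w\<in>B. real (dA w)) + (\<Sum>w\<in>B. real (dB w))"
proof -
  have hs: "2 * real m = (\<Sum>v\<in>V. real (card (nbs V E v)))"
    using handshake[OF sg] me by (metis of_nat_mult of_nat_numeral of_nat_sum)
  have cA: "card (nbs V E v) = 1 + dA v + dB v" if v: "v \<in> A" for v
  proof -
    have Evu: "E v u" using v sg_sym[OF sg] unfolding nbs_def by auto
    have eq: "nbs V E v = insert u ((nbs V E v \<inter> A) \<union> (nbs V E v \<inter> B))"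
      using Evu uV unfolding nbs_def by auto
    have fin: "finite (nbs V E v \<inter> A)" "finite (nbs V E v \<inter> B)" using finA finB by auto
    show ?thesis by (subst eq, subst card_insert_disjoint, use fin uA in auto, subst card_Un_disjoint) (use fin in auto)
  qed
  have cB: "card (nbs V E w) = dA w + dB w" if w: "w \<in> B" for w
  proof -
    have "\<not> E w u" using w sg_sym[OF sg] uV unfolding nbs_def by auto
    then have eq: "nbs V E w = (nbs V E w \<inter> A) \<union> (nbs V E w \<inter> B)"
      unfolding nbs_def by auto
    have fin: "finite (nbs V E w \<inter> A)" "finite (nbs V E w \<inter> B)" using finA finB by auto
    show ?thesis by (subst eq, subst card_Un_disjoint) (use fin in auto)
  qed
  have swap: "(\<Sum>v\<in>A. real (dB v)) = (\<Sum>w\<in>B. real (dA w))"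
    using dc[OF sg AV BV, of "\<lambda>_. 1"] by simp
  have "(\<Sum>v\<in>V. real (card (nbs V E v))) = real (card (nbs V E u)) + ((\<Sum>v\<in>A. real (card (nbs V E v))) + (\<Sum>w\<in>B. real (card (nbs V E w))))"
    by (subst sumV) simp
  also have "(\<Sum>v\<in>A. real (card (nbs V E v))) = (\<Sum>v\<in>A. 1 + real (dA v) + real (dB v))"
    using cA by (intro sum.cong refl) simp
  also have "(\<Sum>w\<in>B. real (card (nbs V E w))) = (\<Sum>w\<in>B. real (dA w) + real (dB w))"
    using cB by (intro sum.cong refl) simp
  finally show ?thesis using hs swap by (simp add: sum.distrib)
qed

lemma Delta:
  "rho + (\<Sum>v\<in>A. real (dA v)) / 2 - (\<Sum>v\<in>A. real (dA v) * y v)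
     + ((\<Sum>w\<in>B. real (dA w)) - (\<Sum>w\<in>B. real (dA w) * y w)) + (\<Sum>w\<in>B. real (dB w)) / 2 < 3/2"
  using rho_sq deg_sum big by simp


lemma FLu:
  assumes "b \<in> A" "d \<in> A" "z \<in> V" "z \<noteq> u" "E b z" "E z d" "b \<noteq> d" "e \<in> A" "f \<in> A" "E e f"
    "e \<noteq> b" "e \<noteq> z" "e \<noteq> d" "f \<noteq> b" "f \<noteq> z" "f \<noteq> d"
  shows False
  by (rule fish_at[OF sg ff uV assms])

lemma yV_le: "X \<subseteq> V \<Longrightarrow> (\<Sum>w\<in>X. y w) \<le> real (card X)"
  using sum_mono[of X y "\<lambda>_. 1"] le1 by auto

lemma yV_ge: "X \<subseteq> V \<Longrightarrow> (\<Sum>w\<in>X. y w) \<ge> 0"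
  using sum_nonneg[of X y] nn by auto

lemma tA_le: "(\<Sum>v\<in>A. real (dA v) * y v) \<le> (\<Sum>v\<in>A. real (dA v))"
proof (intro sum_mono)
  fix v assume "v \<in> A" then have "y v \<le> 1" using AV le1 by auto
  then show "real (dA v) * y v \<le> real (dA v)" by (rule mult_left_le) simp
qed

lemma tAB_le: "(\<Sum>w\<in>B. real (dA w) * y w) \<le> (\<Sum>w\<in>B. real (dA w))"
proof (intro sum_mono)
  fix v assume "v \<in> B" then have "y v \<le> 1" using le1 by auto
  then show "real (dA v) * y v \<le> real (dA v)" by (rule mult_left_le) simp
qed

lemma sA_ge: "(\<Sum>v\<in>A. real (dA v)) \<ge> 0" by (intro sum_nonneg) auto

lemma tA_ge: "(\<Sum>v\<in>A. real (dA v) * y v) \<ge> 0"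
  using AV nn by (intro sum_nonneg) auto

lemma sB_ge: "(\<Sum>w\<in>B. real (dB w)) \<ge> 0" by (intro sum_nonneg) auto

lemma sA_pos: "(\<Sum>v\<in>A. real (dA v)) > 0"
proof (rule ccontr)
  assume "\<not> ?thesis"
  then have "(\<Sum>v\<in>A. real (dA v)) \<le> 0" by simp
  then have "(\<Sum>v\<in>A. real (dA v) * y v) \<le> 0" using tA_le by linarith
  then show False using Delta tAB_le sB_ge rho_big tA_ge sA_ge by linarith
qed

lemma A_edge: obtains e f where "e \<in> A" "f \<in> A" "E e f"
proof -
  obtain v where v: "v \<in> A" "dA v > 0" using sA_pos
    by (metis (no_types, lifting) gr_zeroI of_nat_0 sum.neutral less_irrefl)
  then obtain w where "w \<in> nbs V E v \<inter> A" by (metis card.empty ex_in_conv less_irrefl)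
  then show ?thesis using that v unfolding nbs_def by auto
qed

lemma dA_le3: assumes w: "w \<in> B" shows "dA w \<le> 3"
proof (rule ccontr)
  assume "\<not> ?thesis"
  then have c4: "card (nbs V E w \<inter> A) \<ge> 4" by simp
  obtain e f where ef: "e \<in> A" "f \<in> A" "E e f" by (rule A_edge)
  have "card (nbs V E w \<inter> A - {e, f}) \<ge> 2"
  proof -
    have "card (nbs V E w \<inter> A) \<le> card (nbs V E w \<inter> A - {e,f}) + card {e,f}"
      by (rule card_Un_le[of "nbs V E w \<inter> A - {e,f}" "{e,f}", THEN order_trans[rotated]]) (rule card_mono, use finA in auto)
    moreover have "card {e,f} \<le> 2" by (simp add: card_insert_if)
    ultimately show ?thesis using c4 by linarith
  qed
  then obtain b d where bd: "b \<in> nbs V E w \<inter> A - {e, f}" "d \<in> nbs V E w \<inter> A - {e, f}" "b \<noteq> d"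
    by (rule card_ge2_obtain)
  have "E b w" using bd sg_sym[OF sg] unfolding nbs_def by auto
  moreover have "E w d" using bd unfolding nbs_def by auto
  moreover have "w \<in> V" "w \<noteq> u" "w \<notin> A" using w by auto
  ultimately show False using FLu[of b d w e f] bd ef by auto
qed

lemma dA_eq3:
  assumes w: "w \<in> B" and d3: "dA w = 3" and vv: "v \<in> A" "v' \<in> A" "E v v'"
  shows "v \<in> nbs V E w"
proof (rule ccontr)
  assume nv: "v \<notin> nbs V E w"
  have "card (nbs V E w \<inter> A) \<le> card (nbs V E w \<inter> A - {v'}) + card {v'}"
    by (rule card_Un_le[of "nbs V E w \<inter> A - {v'}" "{v'}", THEN order_trans[rotated]]) (rule card_mono, use finA in auto)
  then have "card (nbs V E w \<inter> A - {v'}) \<ge> 2" using d3 by simp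
  then obtain b d where bd: "b \<in> nbs V E w \<inter> A - {v'}" "d \<in> nbs V E w \<inter> A - {v'}" "b \<noteq> d"
    by (rule card_ge2_obtain)
  have "E b w" using bd sg_sym[OF sg] unfolding nbs_def by auto
  moreover have "E w d" using bd unfolding nbs_def by auto
  moreover have "w \<in> V" "w \<noteq> u" "w \<notin> A" using w by auto
  ultimately show False using FLu[of b d w v v'] bd vv nv by auto
qed

lemma caseI: assumes "\<forall>v\<in>A. dA v \<le> 1" shows False
proof -
  have "(\<Sum>v\<in>A. real (dA v) * y v) \<le> (\<Sum>v\<in>A. y v)"
  proof (intro sum_mono)
    fix v assume v: "v \<in> A"
    then have "real (dA v) \<le> 1" "y v \<ge> 0" using assms AV nn by auto
    then show "real (dA v) * y v \<le> y v" using mult_right_mono[of "real (dA v)" 1 "y v"] by simp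
  qed
  then show False using Delta tAB_le sB_ge rho_big tA_le rho_sumA by linarith
qed


lemma dB_bound: assumes w: "w \<in> B" shows "2 * real (dB w) \<le> (\<Sum>z\<in>B. real (dB z))"
proof -
  have sub: "insert w (nbs V E w \<inter> B) \<subseteq> B" using w by auto
  have wn: "w \<notin> nbs V E w \<inter> B" using sg_irr[OF sg] unfolding nbs_def by auto
  have fin: "finite (nbs V E w \<inter> B)" using finB by auto
  have "(\<Sum>z\<in>insert w (nbs V E w \<inter> B). real (dB z)) \<le> (\<Sum>z\<in>B. real (dB z))"
    by (rule sum_mono2[OF finB sub]) auto
  moreover have "(\<Sum>z\<in>insert w (nbs V E w \<inter> B). real (dB z)) = real (dB w) + (\<Sum>z\<in>nbs V E w \<inter> B. real (dB z))"
    using fin wn by simp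
  moreover have "(\<Sum>z\<in>nbs V E w \<inter> B. real (dB z)) \<ge> (\<Sum>z\<in>nbs V E w \<inter> B. 1)"
  proof (intro sum_mono)
    fix z assume z: "z \<in> nbs V E w \<inter> B"
    then have "w \<in> nbs V E z \<inter> B" using w sg_sym[OF sg] unfolding nbs_def by auto
    then have "nbs V E z \<inter> B \<noteq> {}" by auto
    then have "dB z \<ge> 1" using finB by (simp add: Suc_le_eq card_gt_0_iff)
    then show "1 \<le> real (dB z)" by simp
  qed
  ultimately show ?thesis by simp
qed

lemma Z_bound: assumes w: "w \<in> B" shows "rho * y w \<le> real (dA w) + real (dB w)"
proof -
  have "rho * y w = (\<Sum>z\<in>nbs V E w \<inter> A. y z) + (\<Sum>z\<in>nbs V E w \<inter> B. y z)"
    using eig w nbB_split[OF w] by auto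
  moreover have "(\<Sum>z\<in>nbs V E w \<inter> A. y z) \<le> real (dA w)" by (rule yV_le) (use AV in auto)
  moreover have "(\<Sum>z\<in>nbs V E w \<inter> B. y z) \<le> real (dB w)" by (rule yV_le) auto
  ultimately show ?thesis by linarith
qed

lemma sA_le6_if3:
  assumes w: "w \<in> B" and d3: "dA w = 3"
  shows "(\<Sum>v\<in>A. real (dA v)) \<le> 6"
proof -
  define N where "N = nbs V E w \<inter> A"
  have cN: "card N = 3" using d3 unfolding N_def by simp
  have finN: "finite N" unfolding N_def using finA by auto
  have "real (dA v) \<le> (if v \<in> N then 2 else 0)" if v: "v \<in> A" for v
  proof -
    have sub: "nbs V E v \<inter> A \<subseteq> N - {v}"
    proof
      fix v' assume v': "v' \<in> nbs V E v \<inter> A"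
      then have "E v' v" "v' \<in> A" using sg_sym[OF sg] unfolding nbs_def by auto
      then have "v' \<in> nbs V E w" using dA_eq3[OF w d3] v by blast
      moreover have "v' \<noteq> v" using v' sg_irr[OF sg] unfolding nbs_def by auto
      ultimately show "v' \<in> N - {v}" using v' unfolding N_def by auto
    qed
    show ?thesis
    proof (cases "v \<in> N")
      case True
      have "dA v \<le> card (N - {v})" by (rule card_mono) (use finN sub in auto)
      also have "\<dots> = 2" using True cN finN by simp
      finally show ?thesis using True by simp
    next
      case False
      have "nbs V E v \<inter> A = {}"
      proof (rule ccontr)
        assume "nbs V E v \<inter> A \<noteq> {}"
        then obtain v' where v': "v' \<in> nbs V E v \<inter> A" by auto
        then have "E v v'" "v' \<in> A" unfolding nbs_def by auto
        then have "v \<in> nbs V E w" using dA_eq3[OF w d3] v by blast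
        then show False using False v unfolding N_def by auto
      qed
      then show ?thesis using False by simp
    qed
  qed
  then have "(\<Sum>v\<in>A. real (dA v)) \<le> (\<Sum>v\<in>A. if v \<in> N then 2 else 0)" by (intro sum_mono) auto
  also have "\<dots> = (\<Sum>v\<in>A \<inter> N. 2)" by (rule sum.inter_restrict[OF finA, symmetric])
  also have "A \<inter> N = N" unfolding N_def by auto
  finally show ?thesis using cN by simp
qed

lemma caseIIb:
  assumes S: "S \<subseteq> A" "finite S" "card S \<le> 4" and SE: "\<forall>v\<in>A. \<forall>w\<in>A. E v w \<longrightarrow> v \<in> S \<and> w \<in> S"
  shows False
proof -
  define sA where "sA = (\<Sum>v\<in>A. real (dA v))"
  define tA where "tA = (\<Sum>v\<in>A. real (dA v) * y v)"
  define sAB where "sAB = (\<Sum>w\<in>B. real (dA w))"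
  define tAB where "tAB = (\<Sum>w\<in>B. real (dA w) * y w)"
  define sB where "sB = (\<Sum>w\<in>B. real (dB w))"
  have D: "rho + sA / 2 - tA + (sAB - tAB) + sB / 2 < 3/2"
    using Delta unfolding sA_def tA_def sAB_def tAB_def sB_def .
  have r: "rho \<ge> 26/5" by (rule rho_big)
  have tAle: "tA \<le> sA" "tAB \<le> sAB" "sB \<ge> 0"
    using tA_le tAB_le sB_ge unfolding sA_def tA_def sAB_def tAB_def sB_def by auto
  have dAv: "real (dA v) \<le> (if v \<in> S then 3 else 0)" if v: "v \<in> A" for v
  proof -
    have sub: "nbs V E v \<inter> A \<subseteq> S - {v}"
      using SE v sg_irr[OF sg] unfolding nbs_def by auto
    show ?thesis
    proof (cases "v \<in> S")
      case True
      have "dA v \<le> card (S - {v})" by (rule card_mono) (use S sub in auto)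
      also have "\<dots> \<le> 3" using True S by simp
      finally show ?thesis using True by simp
    next
      case False
      then have "nbs V E v \<inter> A = {}" using SE v unfolding nbs_def by auto
      then show ?thesis using False by simp
    qed
  qed
  have dA3: "real (dA v) \<le> 3" if "v \<in> A" for v using dAv[OF that] by (simp split: if_splits)
  have sA12: "sA \<le> 12"
  proof -
    have "sA \<le> (\<Sum>v\<in>A. if v \<in> S then 3 else 0)" unfolding sA_def using dAv by (intro sum_mono) auto
    also have "\<dots> = (\<Sum>v\<in>A \<inter> S. 3)" by (rule sum.inter_restrict[OF finA, symmetric])
    also have "A \<inter> S = S" using S by auto
    finally show ?thesis using S by simp
  qed
  have key1: "rho * tA \<le> 4 * sA + 3 * tAB"
  proof -
    have per: "real (dA v) * (rho * y v) \<le> 4 * real (dA v) + 3 * (\<Sum>w\<in>nbs V E v \<inter> B. y w)" if v: "v \<in> A" for v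
    proof -
      have "rho * y v = 1 + (\<Sum>w\<in>nbs V E v \<inter> A. y w) + (\<Sum>w\<in>nbs V E v \<inter> B. y w)"
        using eig v AV nbA_split[OF v] by auto
      moreover have "(\<Sum>w\<in>nbs V E v \<inter> A. y w) \<le> real (dA v)" by (rule yV_le) (use AV in auto)
      moreover have "(\<Sum>w\<in>nbs V E v \<inter> B. y w) \<ge> 0" by (rule yV_ge) auto
      ultimately have "rho * y v \<le> 1 + real (dA v) + (\<Sum>w\<in>nbs V E v \<inter> B. y w)" by linarith
      then have "real (dA v) * (rho * y v) \<le> real (dA v) * (1 + real (dA v) + (\<Sum>w\<in>nbs V E v \<inter> B. y w))"
        by (rule mult_left_mono) simp
      also have "\<dots> = real (dA v) + real (dA v) * real (dA v) + real (dA v) * (\<Sum>w\<in>nbs V E v \<inter> B. y w)"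
        by (simp add: algebra_simps)
      also have "\<dots> \<le> real (dA v) + 3 * real (dA v) + 3 * (\<Sum>w\<in>nbs V E v \<inter> B. y w)"
        using dA3[OF v] \<open>(\<Sum>w\<in>nbs V E v \<inter> B. y w) \<ge> 0\<close>
        by (intro add_mono mult_right_mono order_refl) auto
      finally show ?thesis by simp
    qed
    have "rho * tA = (\<Sum>v\<in>A. real (dA v) * (rho * y v))" unfolding tA_def
      by (simp add: sum_distrib_left algebra_simps)
    also have "\<dots> \<le> (\<Sum>v\<in>A. 4 * real (dA v) + 3 * (\<Sum>w\<in>nbs V E v \<inter> B. y w))"
      using per by (intro sum_mono) auto
    also have "\<dots> = 4 * sA + 3 * (\<Sum>v\<in>A. \<Sum>w\<in>nbs V E v \<inter> B. y w)"
      unfolding sA_def by (simp add: sum.distrib sum_distrib_left)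
    also have "(\<Sum>v\<in>A. \<Sum>w\<in>nbs V E v \<inter> B. y w) = tAB" unfolding tAB_def by (rule dc[OF sg AV BV])
    finally show ?thesis .
  qed
  have crude: "rho - sA / 2 + sB / 2 < 3/2" using D tAle by linarith
  have sB4: "sB \<le> 4"
  proof -
    have "sB < 5" using crude sA12 r by linarith
    moreover have "sB = real (\<Sum>w\<in>B. dB w)" unfolding sB_def by simp
    ultimately have "real (\<Sum>w\<in>B. dB w) < 5" by simp
    then have "(\<Sum>w\<in>B. dB w) < 5" by (simp only: of_nat_less_numeral_iff[symmetric])
    then have "(\<Sum>w\<in>B. dB w) \<le> 4" by simp
    then show ?thesis unfolding sB_def by (simp add: of_nat_sum[symmetric] del: of_nat_sum)
  qed
  have R: "rho * rho \<ge> 3 * rho + 9"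
  proof -
    have "rho * rho \<ge> 26/5 * rho" using r by (intro mult_right_mono) auto
    then show ?thesis using r by linarith
  qed
  have gw: "rho * (real (dA w) - real (dA w) * y w) - 3 * (real (dA w) * y w) + rho * real (dB w) / 2 \<ge> 0"
    if w: "w \<in> B" for w
  proof -
    define a where "a = real (dA w)"
    define b where "b = real (dB w)"
    define Z where "Z = rho * y w"
    have Zb: "Z \<le> a + b" unfolding Z_def a_def b_def by (rule Z_bound[OF w])
    have Z0: "Z \<ge> 0" unfolding Z_def using nn w r by auto
    have rZ: "rho * Z \<le> rho * (a + b)" using Zb r by (intro mult_left_mono) auto
    have a3: "dA w \<le> 3" by (rule dA_le3[OF w])
    have b2: "2 * b \<le> sB" unfolding b_def sB_def by (rule dB_bound[OF w])
    have case_b: "dA w \<le> 2" if "dB w \<ge> 1"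
    proof -
      have "sB \<ge> 2" using b2 that unfolding b_def by simp
      then have "sA > 6" using crude r by linarith
      then show ?thesis using a3 sA_le6_if3[OF w] unfolding sA_def by (cases "dA w = 3") auto
    qed
    have eq: "rho * (rho * (a - a * y w) - 3 * (a * y w) + rho * b / 2) = a * (rho * rho) - a * (rho * Z) - 3 * a * Z + b * (rho * rho) / 2"
      unfolding Z_def by (simp add: algebra_simps)
    have "a * (rho * rho) - a * (rho * Z) - 3 * a * Z + b * (rho * rho) / 2 \<ge> 0"
    proof -
      have bb: "dB w \<le> 2" using b2 sB4 unfolding b_def by simp
      have cb: "dB w \<ge> 1 \<longrightarrow> dA w \<le> 2" using case_b by blast
      have "(a = 0) \<or> (a = 1 \<and> b = 0) \<or> (a = 2 \<and> b = 0) \<or> (a = 3 \<and> b = 0)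
        \<or> (a = 1 \<and> b = 1) \<or> (a = 1 \<and> b = 2) \<or> (a = 2 \<and> b = 1) \<or> (a = 2 \<and> b = 2)"
        using nat_cases8[OF a3 bb cb] unfolding a_def b_def by auto
      then show ?thesis by (rule brk[OF _ rZ Zb Z0]) (use R r in auto)
    qed
    then have "rho * (rho * (a - a * y w) - 3 * (a * y w) + rho * b / 2) \<ge> 0" using eq by simp
    then show ?thesis unfolding a_def b_def using r by (simp add: zero_le_mult_iff)
  qed
  have "(\<Sum>w\<in>B. rho * (real (dA w) - real (dA w) * y w) - 3 * (real (dA w) * y w) + rho * real (dB w) / 2) \<ge> 0"
    using gw by (intro sum_nonneg) auto
  moreover have "(\<Sum>w\<in>B. rho * (real (dA w) - real (dA w) * y w) - 3 * (real (dA w) * y w) + rho * real (dB w) / 2)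
     = (\<Sum>w\<in>B. rho * (real (dA w) - real (dA w) * y w)) - (\<Sum>w\<in>B. 3 * (real (dA w) * y w)) + (\<Sum>w\<in>B. rho * real (dB w) / 2)"
    by (simp add: sum.distrib sum_subtractf)
  moreover have "(\<Sum>w\<in>B. rho * (real (dA w) - real (dA w) * y w)) = rho * (sAB - tAB)"
    unfolding sAB_def tAB_def by (simp only: sum_distrib_left[symmetric] sum_subtractf)
  moreover have "(\<Sum>w\<in>B. 3 * (real (dA w) * y w)) = 3 * tAB"
    unfolding tAB_def by (simp add: sum_distrib_left)
  moreover have "(\<Sum>w\<in>B. rho * real (dB w) / 2) = rho * sB / 2"
    unfolding sB_def by (simp add: sum_distrib_left sum_divide_distrib)
  ultimately have G: "rho * (sAB - tAB) - 3 * tAB + rho * sB / 2 \<ge> 0" by linarith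
  have "rho * (rho + sA / 2 - tA + (sAB - tAB) + sB / 2) \<le> rho * (3/2)"
    using D r by (intro mult_left_mono) auto
  then have "rho * rho + rho * sA / 2 - rho * tA + rho * (sAB - tAB) + rho * sB / 2 \<le> 3/2 * rho"
    by (simp add: algebra_simps)
  then have main: "rho * rho + rho * sA / 2 - 4 * sA \<le> 3/2 * rho" using key1 G by linarith
  have sA0: "sA \<ge> 0" unfolding sA_def by (rule sA_ge)
  show False
  proof (cases "rho \<ge> 8")
    case True
    have "sA * (rho / 2 - 4) \<ge> 0" using True sA0 by simp
    moreover have "sA * (rho / 2 - 4) = rho * sA / 2 - 4 * sA" by (simp add: algebra_simps)
    moreover have "rho * rho \<ge> 8 * rho" using True by (intro mult_right_mono) auto
    ultimately show False using main True by (simp add: algebra_simps; linarith)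
  next
    case False
    have "sA * (rho / 2 - 4) \<ge> 12 * (rho / 2 - 4)" using False sA12 by (intro mult_right_mono_neg) auto
    moreover have "sA * (rho / 2 - 4) = rho * sA / 2 - 4 * sA" by (simp add: algebra_simps)
    moreover have "rho * rho \<ge> 26/5 * rho" using r by (intro mult_right_mono) auto
    ultimately show False using main r by (simp add: algebra_simps; linarith)
  qed
qed


lemma Delta_eq:
  "real m - rho^2 + rho = rho + (\<Sum>v\<in>A. real (dA v)) / 2 - (\<Sum>v\<in>A. real (dA v) * y v)
     + ((\<Sum>w\<in>B. real (dA w)) - (\<Sum>w\<in>B. real (dA w) * y w)) + (\<Sum>w\<in>B. real (dB w)) / 2"
  using rho_sq deg_sum by simp

lemma Bt_term:
  assumes w: "w \<in> B"
  shows "real (dA w) * (1 - y w) + real (dB w) / 2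
     \<le> ((\<Sum>w\<in>B. real (dA w)) - (\<Sum>w\<in>B. real (dA w) * y w)) + (\<Sum>w\<in>B. real (dB w)) / 2"
proof -
  have eq: "((\<Sum>w\<in>B. real (dA w)) - (\<Sum>w\<in>B. real (dA w) * y w)) + (\<Sum>w\<in>B. real (dB w)) / 2
     = (\<Sum>w\<in>B. real (dA w) * (1 - y w) + real (dB w) / 2)"
    by (simp add: sum.distrib sum_subtractf sum_divide_distrib algebra_simps)
  have "real (dA w) * (1 - y w) + real (dB w) / 2 \<le> (\<Sum>w\<in>B. real (dA w) * (1 - y w) + real (dB w) / 2)"
    by (rule member_le_sum[OF w _ finB]) (use le1 in auto)
  then show ?thesis using eq by simp
qed

lemma caseIIa:
  assumes c: "c \<in> A" "dA c \<ge> 2" and star: "\<forall>v\<in>A. \<forall>w\<in>A. E v w \<longrightarrow> v = c \<or> w = c"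
  shows "graph_iso V E (Sminus_V ((m+4) div 2)) (Sminus_E ((m+4) div 2))"
proof -
  define L where "L = nbs V E c \<inter> A"
  define k where "k = card L"
  define A0 where "A0 = A - insert c L"
  have k2: "k \<ge> 2" using c unfolding k_def L_def by simp
  have finL: "finite L" "finite A0" unfolding L_def A0_def using finA by auto
  have LA: "L \<subseteq> A - {c}" unfolding L_def nbs_def using sg_irr[OF sg] by auto
  have Adec: "A = insert c (L \<union> A0)" unfolding A0_def using c LA by auto
  have disj: "c \<notin> L" "c \<notin> A0" "L \<inter> A0 = {}" using LA unfolding A0_def by auto
  have r: "rho \<ge> 26/5" by (rule rho_big)
  have nbv: "nbs V E v \<inter> A = (if v \<in> L then {c} else {})" if v: "v \<in> A" "v \<noteq> c" for v
  proof -
    have "nbs V E v \<inter> A \<subseteq> {c}" using star v unfolding nbs_def by auto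
    moreover have "c \<in> nbs V E v \<longleftrightarrow> v \<in> L"
      using v c AV sg_sym[OF sg] unfolding L_def nbs_def by auto
    ultimately show ?thesis using c by auto
  qed
  have sA: "(\<Sum>v\<in>A. real (dA v)) = 2 * real k"
  proof -
    have "(\<Sum>v\<in>A. real (dA v)) = real (dA c) + (\<Sum>v\<in>L \<union> A0. real (dA v))"
      using finL disj by (subst Adec) (simp add: sum.insert)
    also have "(\<Sum>v\<in>L \<union> A0. real (dA v)) = (\<Sum>v\<in>L. 1) + (\<Sum>v\<in>A0. 0)"
      using finL disj LA nbv unfolding A0_def
      by (subst sum.union_disjoint) (auto intro!: sum.cong simp: subset_iff)
    finally show ?thesis unfolding k_def L_def by simp
  qed
  have tA: "(\<Sum>v\<in>A. real (dA v) * y v) = real k * y c + (\<Sum>v\<in>L. y v)"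
  proof -
    have "(\<Sum>v\<in>A. real (dA v) * y v) = real (dA c) * y c + (\<Sum>v\<in>L \<union> A0. real (dA v) * y v)"
      using finL disj by (subst Adec) (simp add: sum.insert)
    also have "(\<Sum>v\<in>L \<union> A0. real (dA v) * y v) = (\<Sum>v\<in>L. y v) + (\<Sum>v\<in>A0. 0)"
      using finL disj LA nbv unfolding A0_def
      by (subst sum.union_disjoint) (auto intro!: sum.cong simp: subset_iff)
    finally show ?thesis unfolding k_def L_def by simp
  qed
  define T where "T = (\<Sum>v\<in>A0. y v)"
  define Y where "Y = (\<Sum>w\<in>nbs V E c \<inter> B. y w)"
  have rA: "rho = y c + (\<Sum>v\<in>L. y v) + T"
    unfolding rho_sumA T_def using finL disj by (subst Adec) (simp add: sum.insert sum.union_disjoint)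
  have rc: "rho * y c = 1 + (\<Sum>v\<in>L. y v) + Y"
    using eig c AV nbA_split[OF c(1)] unfolding L_def Y_def by auto
  have T0: "T \<ge> 0" unfolding T_def using nn AV A0_def by (intro sum_nonneg) auto
  have Y0: "Y \<ge> 0" unfolding Y_def by (rule yV_ge) auto
  have yc: "y c \<le> 1" "y c \<ge> 0" using le1 nn c AV by auto
  define Bt where "Bt = ((\<Sum>w\<in>B. real (dA w)) - (\<Sum>w\<in>B. real (dA w) * y w)) + (\<Sum>w\<in>B. real (dB w)) / 2"
  have Bt0: "Bt \<ge> 0" unfolding Bt_def using tAB_le sB_ge by linarith
  have DD: "real m - rho^2 + rho = y c + T + real k * (1 - y c) + Bt"
    using Delta_eq unfolding sA tA Bt_def using rA by (simp add: algebra_simps)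
  have D: "y c + T + real k * (1 - y c) + Bt < 3/2" using DD big by simp
  have "real k * (1 - y c) \<ge> 1 - y c" using k2 yc by (intro mult_right_mono[of 1 "real k" "1 - y c", simplified]) auto
  then have TB: "T < 1/2" "Bt < 1/2" using D T0 Bt0 by linarith+
  have Bempty: "B = {}"
  proof (rule ccontr)
    assume "B \<noteq> {}"
    then obtain w where w: "w \<in> B" by auto
    have trm: "real (dA w) * (1 - y w) + real (dB w) / 2 < 1/2" using Bt_term[OF w] TB unfolding Bt_def by linarith
    have yw: "0 \<le> y w" "y w \<le> 1" using w nn le1 by auto
    have dB0: "dB w = 0"
    proof (rule ccontr)
      assume "dB w \<noteq> 0"
      then have "real (dB w) / 2 \<ge> 1/2" by simp
      moreover have "real (dA w) * (1 - y w) \<ge> 0" using yw by simp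
      ultimately show False using trm by linarith
    qed
    have Zb: "rho * y w \<le> real (dA w)" using Z_bound[OF w] dB0 by simp
    have dA0: "dA w = 0"
    proof (rule ccontr)
      assume "dA w \<noteq> 0"
      then have a13: "dA w \<ge> 1" "dA w \<le> 3" using dA_le3[OF w] by auto
      define a where "a = real (dA w)"
      have "rho * (a * (1 - y w)) = a * rho - a * (rho * y w)" by (simp add: algebra_simps)
      also have "\<dots> \<ge> a * rho - a * a" using Zb a13 unfolding a_def by (simp add: mult_left_mono)
      finally have h: "rho * (a * (1 - y w)) \<ge> a * rho - a * a" .
      have "a * rho - a * a \<ge> rho / 2"
      proof -
        have "a = 1 \<or> a = 2 \<or> a = 3" using a13 unfolding a_def by auto
        then show ?thesis using r by auto
      qed
      then have "rho * (a * (1 - y w)) \<ge> rho * (1/2)" using h by simp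
      moreover have rp: "rho > 0" using r by simp
      ultimately have "a * (1 - y w) \<ge> 1/2" using mult_le_cancel_left_pos[OF rp, of "1/2" "a * (1 - y w)"] by blast
      then show False using trm dB0 unfolding a_def by simp
    qed
    have "nbs V E w \<inter> A = {}" "nbs V E w \<inter> B = {}" using dA0 dB0 finA finB by auto
    moreover have "\<not> E w u" using w sg_sym[OF sg] uV unfolding nbs_def by auto
    moreover obtain x where "E w x" using ni w unfolding no_isolated_def by auto
    ultimately show False using sg_in[OF sg] unfolding nbs_def by auto
  qed
  have VA: "V = insert u A" using Bempty Vsplit by auto
  have Y0': "Y = 0" unfolding Y_def by (simp only: Bempty) simp
  have Bt0': "Bt = 0" unfolding Bt_def by (simp only: Bempty) simp
  define a where "a = card A0"
  have ypA0: "rho * y p = 1" if p: "p \<in> A0" for p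
  proof -
    have pA: "p \<in> A" "p \<noteq> c" "p \<notin> L" using p unfolding A0_def by auto
    have "rho * y p = 1 + (\<Sum>w\<in>nbs V E p \<inter> A. y w) + (\<Sum>w\<in>nbs V E p \<inter> B. y w)"
      using eig pA AV nbA_split[OF pA(1)] by auto
    then show ?thesis using nbv[OF pA(1,2)] pA(3) Bempty by simp
  qed
  have rT: "rho * T = real a" unfolding T_def a_def sum_distrib_left using ypA0 by simp
  have mk: "real m = 2 * real k + 1 + real a"
  proof -
    have "card A = 1 + k + a" unfolding k_def a_def using finL disj by (subst Adec) (simp add: card_Un_disjoint)
    then show ?thesis using deg_sum sA Bempty by simp
  qed
  have mk': "m = 2 * k + 1 + a" using mk by linarith
  have aodd: "odd a" using evm mk' by simp
  have a1: "a = 1"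
  proof (rule ccontr)
    assume "a \<noteq> 1"
    then have a3: "a \<ge> 3" using aodd by presburger
    define q where "q = 1 - y c"
    have q0: "q \<ge> 0" unfolding q_def using yc by simp
    have qT: "q * (rho + 1) = T" unfolding q_def using rA rc Y0' by (simp add: algebra_simps)
    have Dq: "real m - rho^2 + rho = 1 + T + (real k - 1) * q" using DD Bt0' unfolding q_def by (simp add: algebra_simps)
    have h1: "T + (real k - 1) * q < 1/2" using Dq big by simp
    have D1: "real m - rho^2 + rho \<ge> 1" using Dq T0 q0 k2 by simp
    have pos: "rho * (rho + 1) > 0" using r by simp
    have "(T + (real k - 1) * q) * (rho * (rho + 1)) < 1/2 * (rho * (rho + 1))"
      using h1 pos by (intro mult_strict_right_mono) auto
    moreover have "(T + (real k - 1) * q) * (rho * (rho + 1)) = real a * (rho + 1) + (real k - 1) * real a"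
    proof -
      have "(T + (real k - 1) * q) * (rho * (rho + 1)) = (rho * T) * (rho + 1) + (real k - 1) * ((q * (rho + 1)) * rho)"
        by (simp add: algebra_simps)
      also have "\<dots> = real a * (rho + 1) + (real k - 1) * (T * rho)" by (simp only: rT qT)
      also have "\<dots> = real a * (rho + 1) + (real k - 1) * real a" using rT by (simp add: mult.commute)
      finally show ?thesis .
    qed
    ultimately have "real a * (rho + 1) + (real k - 1) * real a < 1/2 * (rho * (rho + 1))" by simp
    then have h2: "real a * rho + real a * real k < 1/2 * (rho * rho + rho)" by (simp add: algebra_simps)
    have h3: "rho * rho \<le> 2 * real k + real a + rho" using D1 mk by (simp add: power2_eq_square)
    have h4: "real a * rho \<ge> 3 * rho" using a3 r by (intro mult_right_mono) auto
    have h5: "real a * real k \<ge> 3 * real k" using a3 by (intro mult_right_mono) auto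
    have h6: "real a < rho / 2" using rT TB r by (metis mult_strict_left_mono mult.commute times_divide_eq_right mult_1_right less_eq_real_def not_less zero_less_numeral divide_pos_pos order_less_le_trans)
    show False by (rule fin_contra[OF h2 h3 h4 h5 h6 r]) simp
  qed
  obtain p where A0p: "A0 = {p}" using a1 unfolding a_def by (auto simp: card_1_singleton_iff)
  define n where "n = (m + 4) div 2"
  have nk: "n = k + 3" unfolding n_def using mk' a1 by simp
  have cL: "card {3..<k+3} = k" by simp
  obtain g where g: "bij_betw g L {3..<k+3}"
    using finite_same_card_bij[OF finL(1), of "{3..<k+3}"] cL unfolding k_def by auto
  have pprops: "p \<in> A" "p \<noteq> c" "p \<notin> L" using A0p unfolding A0_def by auto
  have uprops: "u \<noteq> c" "u \<noteq> p" "u \<notin> L" using uA c pprops LA by auto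
  define h where "h = (\<lambda>v. if v = u then 0 else if v = c then 1 else if v = p then 2 else g v)"
  have Vdec: "V = insert u (insert c (insert p L))" using VA Adec A0p by auto
  have gL: "g v \<in> {3..<k+3}" if "v \<in> L" for v using g that unfolding bij_betw_def by auto
  have hL: "h v = g v" if "v \<in> L" for v using that uprops disj pprops unfolding h_def by auto
  have hu: "h u = 0" unfolding h_def by simp
  have hc: "h c = 1" using uprops unfolding h_def by simp
  have hp: "h p = 2" using uprops pprops unfolding h_def by simp
  have hcases: "(v = u \<and> h v = 0) \<or> (v = c \<and> h v = 1) \<or> (v = p \<and> h v = 2) \<or> (v \<in> L \<and> 3 \<le> h v \<and> h v < k + 3)"
    if "v \<in> V" for v
  proof -
    have "v = u \<or> v = c \<or> v = p \<or> v \<in> L" using that Vdec by auto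
    then show ?thesis
    proof (elim disjE)
      assume "v \<in> L" then show ?thesis using hL gL by auto
    qed (use hu hc hp in auto)
  qed
  have h0: "h v = 0 \<longleftrightarrow> v = u" if "v \<in> V" for v using hcases[OF that] uprops by auto
  have h1: "h v = 1 \<longleftrightarrow> v = c" if "v \<in> V" for v using hcases[OF that] uprops pprops disj by auto
  have h3: "3 \<le> h v \<longleftrightarrow> v \<in> L" if "v \<in> V" for v using hcases[OF that] uprops pprops disj by auto
  have hn: "h v < n" if "v \<in> V" for v using hcases[OF that] nk by auto
  have inj: "inj_on h V"
  proof (rule inj_onI)
    fix v w assume vw: "v \<in> V" "w \<in> V" "h v = h w"
    show "v = w"
    proof (cases "v \<in> L \<and> w \<in> L")
      case True
      then have "g v = g w" using vw hL by simp
      then show ?thesis using True g unfolding bij_betw_def inj_on_def by blast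
    next
      case False
      then show ?thesis using hcases[OF vw(1)] hcases[OF vw(2)] vw(3) by auto
    qed
  qed
  have img: "h ` V = {0..<n}"
  proof
    show "h ` V \<subseteq> {0..<n}" using hn by auto
    show "{0..<n} \<subseteq> h ` V"
    proof
      fix x assume x: "x \<in> {0..<n}"
      consider "x = 0" | "x = 1" | "x = 2" | "x \<in> {3..<k+3}" using x nk by force
      then show "x \<in> h ` V"
      proof cases
        case 1 then show ?thesis using uV unfolding h_def by force
      next
        case 2 then show ?thesis using c AV uprops unfolding h_def by force
      next
        case 3 then show ?thesis using pprops AV uprops unfolding h_def by force
      next
        case 4
        then have "x \<in> g ` L" using g unfolding bij_betw_def by simp
        then obtain v where "v \<in> L" "g v = x" by blast
        then show ?thesis using hL Vdec by force
      qed
    qed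
  qed
  have Echar: "E v w \<longleftrightarrow> (v = u \<and> w \<noteq> u) \<or> (w = u \<and> v \<noteq> u) \<or> (v = c \<and> w \<in> L) \<or> (w = c \<and> v \<in> L)"
    if vw: "v \<in> V" "w \<in> V" for v w
  proof (cases "v = u \<or> w = u")
    case True
    then show ?thesis using vw VA uprops sg_sym[OF sg] sg_irr[OF sg] LA unfolding nbs_def by auto
  next
    case False
    then have vwA: "v \<in> A" "w \<in> A" using vw VA by auto
    show ?thesis
    proof
      assume "E v w"
      then have "v = c \<or> w = c" using star vwA by auto
      then show "(v = u \<and> w \<noteq> u) \<or> (w = u \<and> v \<noteq> u) \<or> (v = c \<and> w \<in> L) \<or> (w = c \<and> v \<in> L)"
        using \<open>E v w\<close> vwA sg_sym[OF sg] AV unfolding L_def nbs_def by auto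
    next
      assume "(v = u \<and> w \<noteq> u) \<or> (w = u \<and> v \<noteq> u) \<or> (v = c \<and> w \<in> L) \<or> (w = c \<and> v \<in> L)"
      then show "E v w" using False sg_sym[OF sg] unfolding L_def nbs_def by auto
    qed
  qed
  have "\<forall>v\<in>V. \<forall>w\<in>V. E v w \<longleftrightarrow> Sminus_E n (h v) (h w)"
  proof (intro ballI)
    fix v w assume vw: "v \<in> V" "w \<in> V"
    show "E v w \<longleftrightarrow> Sminus_E n (h v) (h w)"
      unfolding Echar[OF vw] Sminus_E_iff
      by (simp only: h0[OF vw(1)] h0[OF vw(2)] h1[OF vw(1)] h1[OF vw(2)] h3[OF vw(1)] h3[OF vw(2)] hn[OF vw(1)] hn[OF vw(2)] simp_thms)
  qed
  then show ?thesis unfolding graph_iso_def n_def[symmetric] Sminus_V_def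
    using inj img unfolding bij_betw_def by blast
qed


lemma core: "graph_iso V E (Sminus_V ((m+4) div 2)) (Sminus_E ((m+4) div 2))"
proof -
  have FLA: "False" if "b\<in>A" "z\<in>A" "d\<in>A" "e\<in>A" "f\<in>A" "E b z" "E z d" "b\<noteq>d"
        "E e f" "e\<noteq>b" "e\<noteq>z" "e\<noteq>d" "f\<noteq>b" "f\<noteq>z" "f\<noteq>d" for b z d e f
  proof -
    have "z \<in> V" "z \<noteq> u" using that(2) AV uA by auto
    then show False using FLu[of b d z e f] that by blast
  qed
  have st: "(\<forall>v\<in>A. card {w\<in>A. E v w} \<le> 1) \<or>
         (\<exists>c\<in>A. card {w\<in>A. E c w} \<ge> 2 \<and> (\<forall>v\<in>A. \<forall>w\<in>A. E v w \<longrightarrow> v = c \<or> w = c)) \<or>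
         (\<exists>S. S \<subseteq> A \<and> finite S \<and> card S \<le> 4 \<and> (\<forall>v\<in>A. \<forall>w\<in>A. E v w \<longrightarrow> v \<in> S \<and> w \<in> S))"
    by (rule struct_lemma[of E A]) (use sg_sym[OF sg] sg_irr[OF sg] finA FLA in \<open>blast+\<close>)
  have eqA: "{w\<in>A. E v w} = nbs V E v \<inter> A" for v using nbs_inter[OF AV] by simp
  from st show ?thesis
  proof (elim disjE)
    assume "\<forall>v\<in>A. card {w\<in>A. E v w} \<le> 1"
    then have False using caseI eqA by simp
    then show ?thesis ..
  next
    assume "\<exists>c\<in>A. card {w\<in>A. E c w} \<ge> 2 \<and> (\<forall>v\<in>A. \<forall>w\<in>A. E v w \<longrightarrow> v = c \<or> w = c)"
    then obtain c where "c \<in> A" "dA c \<ge> 2" "\<forall>v\<in>A. \<forall>w\<in>A. E v w \<longrightarrow> v = c \<or> w = c"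
      using eqA by auto
    then show ?thesis by (rule caseIIa)
  next
    assume "\<exists>S. S \<subseteq> A \<and> finite S \<and> card S \<le> 4 \<and> (\<forall>v\<in>A. \<forall>w\<in>A. E v w \<longrightarrow> v \<in> S \<and> w \<in> S)"
    then have False using caseIIb by blast
    then show ?thesis ..
  qed
qed

end



theorem theorem1p1:
  fixes V :: "'a set" and E :: "'a \<Rightarrow> 'a \<Rightarrow> bool" and m :: nat
  assumes "simple_graph V E"
    and "fish_free V E"
    and "no_isolated V E"
    and "num_edges E = m"
    and "even m" and "m \<ge> 24"
  shows "spectral_radius V E \<le> rho' m \<and>
         (spectral_radius V E = rho' m \<longleftrightarrow>
            graph_iso V E (Sminus_V ((m + 4) div 2)) (Sminus_E ((m + 4) div 2)))"
proof -
  note sg = assms(1) and ff = assms(2) and ni = assms(3) and me = assms(4) and evm = assms(5) and m24 = assms(6)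
  have fin: "finite V" using sg_fin[OF sg] .
  have ne: "V \<noteq> {}"
  proof
    assume V0: "V = {}"
    have "edge_set E = {}" unfolding edge_set_def using sg_in[OF sg] V0 by auto
    then show False using me m24 unfolding num_edges_def by simp
  qed
  obtain M x where eig: "\<forall>v\<in>V. (\<Sum>w\<in>nbs V E v. x w) = M * x v" and nn: "\<forall>v\<in>V. x v \<ge> 0"
    and nz: "\<exists>v\<in>V. x v \<noteq> 0" and bound: "\<forall>lam. adj_eigenvalue V E lam \<longrightarrow> lam \<le> M" and M0: "M \<ge> 0"
    using perron[OF sg ne] by blast
  have Meig: "adj_eigenvalue V E M" unfolding adj_eigenvalue_def using eig nz unfolding nbs_def by blast
  have sr: "spectral_radius V E = M" unfolding spectral_radius_def
    by (rule Max_eqI[OF eig_finite[OF sg]]) (use Meig bound in auto)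
  define n where "n = (m + 4) div 2"
  have n14: "n \<ge> 14" and n2: "2 * n - 4 = m" unfolding n_def using m24 evm by auto
  have iso_sr: "spectral_radius V E = rho' m" if iso: "graph_iso V E (Sminus_V n) (Sminus_E n)"
    using graph_iso_sr[OF iso] Sm_sr[OF n14] n2 by simp
  have key: "graph_iso V E (Sminus_V n) (Sminus_E n)" if ge: "M \<ge> rho' m"
  proof -
    have "Max (x ` V) \<in> x ` V" using fin ne by (intro Max_in) auto
    then obtain u where uV: "u \<in> V" and xu: "x u = Max (x ` V)" by auto
    have xmax: "x v \<le> x u" if "v \<in> V" for v using xu fin that by simp
    obtain v0 where v0: "v0 \<in> V" "x v0 \<noteq> 0" using nz by blast
    have xu0: "x u > 0" using xmax[OF v0(1)] nn v0 by force
    define y where "y = (\<lambda>v. x v / x u)"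
    have eigy: "\<forall>v\<in>V. (\<Sum>w\<in>nbs V E v. y w) = M * y v"
      unfolding y_def using eig by (simp add: sum_divide_distrib[symmetric])
    have nny: "\<forall>v\<in>V. 0 \<le> y v" unfolding y_def using nn xu0 by simp
    have le1: "\<forall>v\<in>V. y v \<le> 1" unfolding y_def using xmax xu0 by simp
    have yu: "y u = 1" unfolding y_def using xu0 by simp
    have r1: "rho' m > 1" using rho'_props(2)[OF m24] .
    have gap: "rho' m ^ 2 - rho' m > real m - 3/2" using rho'_gap[OF m24] .
    have "M^2 - M - (rho' m ^ 2 - rho' m) = (M - rho' m) * (M + rho' m - 1)"
      by (simp add: algebra_simps power2_eq_square)
    also have "\<dots> \<ge> 0" using ge r1 by (intro mult_nonneg_nonneg) auto
    finally have big: "M^2 - M > real m - 3/2" using gap by simp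
    show ?thesis unfolding n_def
      by (rule core[OF sg ff ni me evm m24 uV eigy nny le1 yu big M0])
  qed
  show ?thesis
  proof (intro conjI iffI)
    show "spectral_radius V E \<le> rho' m"
    proof (rule ccontr)
      assume "\<not> ?thesis"
      then have "M \<ge> rho' m" using sr by simp
      then show False using iso_sr[OF key] \<open>\<not> spectral_radius V E \<le> rho' m\<close> by simp
    qed
  next
    assume "spectral_radius V E = rho' m"
    then show "graph_iso V E (Sminus_V ((m + 4) div 2)) (Sminus_E ((m + 4) div 2))"
      using key sr unfolding n_def by simp
  next
    assume "graph_iso V E (Sminus_V ((m + 4) div 2)) (Sminus_E ((m + 4) div 2))"
    then show "spectral_radius V E = rho' m" using iso_sr unfolding n_def by simp
  qed
qed


end
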